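(* If $m$ is a finite linear combination of functions $q_{P,\sigma}[C_{P,\sigma}]$, where each $P$ is a rational polyhedron, $\sigma\in\Lambda_{\mathbb{Q}}$ and $q_{P,\sigma}$ is a quasi-polynomial function on $\mathbb{Z}\oplus\Lambda$, then $m\in\mathcal{S}_{\mathrm{pol}}(\Lambda)$.
   Context: $V$ finite-dimensional real vector space, $\Lambda\subset V$ full-rank lattice, $\Lambda_{\mathbb{Q}}=\Lambda\otimes\mathbb{Q}$. Rational polyhedron: finite intersection of half-spaces $\{v:\langle a,v\rangle\ge c\}$, $a\in\mathrm{Hom}(\Lambda,\mathbb{Z})\otimes\mathbb{Q}$, $c\in\mathbb{Q}$. $C_{P,\sigma}=\{(t,tv+\sigma):t>0,v\in P\}$, $[C_{P,\sigma}]$ its indicator on $\mathbb{Z}\oplus\Lambda$. Quasi-polynomials: algebra generated by polynomials and periodic functions. $\mathcal{S}(\Lambda)$: functions $\sum_{P\in\mathcal{P}}\sum_{\sigma\in\Sigma_P}q_{P,\sigma}[C_{P,\sigma}]$ (decompositions) with $\mathcal{P}$ rational polyhedra, $\Sigma_P\subset\Lambda_{\mathbb{Q}}$, $q_{P,\sigma}$ quasi-polynomial, and $\{P+[0,1]\sigma\}$ locally finite in $V$. A rational polyhedral cone is a rational polyhedron $P=w+K$ with $K$ a closed convex polyhedral cone; its apex set is $L_P=w+(K\cap-K)$. For a closed half-space $H$, $P$ is $H$-polarized if $P\subset H$ and $P\cap\partial H=L_P$. $\mathcal{S}_{\mathrm{pol}}(\Lambda)$ is the set of $m\in\mathcal{S}(\Lambda)$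 having a decomposition with $\mathcal{P}$ a collection of distinct rational polyhedral cones such that for every proper affine subspace $L\subsetneq V$ which is the apex set of some cone in $\mathcal{P}$, there is a closed half-space $H$ (depending on $L$) such that every cone in $\mathcal{P}$ with apex set $L$ is $H$-polarized. *)

theory Defs
  imports "HOL-Analysis.Analysis"
begin

definition full_rank_lattice :: "'v::euclidean_space set \<Rightarrow> bool" where
  "full_rank_lattice \<Lambda> \<longleftrightarrow>
     (\<exists>B. independent B \<and> span B = UNIV \<and>
          \<Lambda> = range (\<lambda>k::'v \<Rightarrow> int. \<Sum>b\<in>B. of_int (k b) *\<^sub>R b))"

text \<open>Lambda tensor Q, viewed inside V.\<close>
definition lattice_Q :: "'v::euclidean_space set \<Rightarrow> 'v set" where
  "lattice_Q \<Lambda> = {x. \<exists>n::nat. n > 0 \<and> of_nat n *\<^sub>R x \<in> \<Lambda>}"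

text \<open>Rational linear functionals (elements of Hom(Lambda,Z) tensor Q), represented via
  the inner product.\<close>
definition rat_functional :: "'v::euclidean_space set \<Rightarrow> 'v \<Rightarrow> bool" where
  "rat_functional \<Lambda> a \<longleftrightarrow> (\<forall>l\<in>\<Lambda>. a \<bullet> l \<in> \<rat>)"

definition rat_polyhedron :: "'v::euclidean_space set \<Rightarrow> 'v set \<Rightarrow> bool" where
  "rat_polyhedron \<Lambda> P \<longleftrightarrow>
     (\<exists>F. finite F \<and> (\<forall>(a, c)\<in>F. rat_functional \<Lambda> a \<and> c \<in> \<rat>) \<and>
          P = (\<Inter>(a, c)\<in>F. {v. a \<bullet> v \<ge> c}))"

definition in_cone :: "'v::euclidean_space set \<Rightarrow> 'v \<Rightarrow> int \<times> 'v \<Rightarrow> bool" where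
  "in_cone P \<sigma> tx \<longleftrightarrow> fst tx > 0 \<and> (\<exists>v\<in>P. snd tx = of_int (fst tx) *\<^sub>R v + \<sigma>)"

text \<open>Functions on Z (+) Lambda are represented as functions on int x V; only their
  values at points of int x Lambda matter.\<close>
definition periodic_fun :: "'v::euclidean_space set \<Rightarrow> (int \<times> 'v \<Rightarrow> complex) \<Rightarrow> bool" where
  "periodic_fun \<Lambda> f \<longleftrightarrow>
     (\<exists>N::int. N > 0 \<and> (\<forall>t x s y. x \<in> \<Lambda> \<longrightarrow> y \<in> \<Lambda> \<longrightarrow>
         f (t + N * s, x + of_int N *\<^sub>R y) = f (t, x)))"

text \<open>Quasi-polynomials: the algebra generated by polynomials and periodic functions.
  Constants are periodic; polynomials are generated by the coordinate t and linear
  functions of x.\<close>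
inductive quasi_poly :: "'v::euclidean_space set \<Rightarrow> (int \<times> 'v \<Rightarrow> complex) \<Rightarrow> bool"
  for \<Lambda> where
  qp_periodic: "periodic_fun \<Lambda> f \<Longrightarrow> quasi_poly \<Lambda> f"
| qp_t: "quasi_poly \<Lambda> (\<lambda>(t, x). of_int t)"
| qp_lin: "quasi_poly \<Lambda> (\<lambda>(t, x). of_real (a \<bullet> x))"
| qp_add: "quasi_poly \<Lambda> f \<Longrightarrow> quasi_poly \<Lambda> g \<Longrightarrow> quasi_poly \<Lambda> (\<lambda>z. f z + g z)"
| qp_mult: "quasi_poly \<Lambda> f \<Longrightarrow> quasi_poly \<Lambda> g \<Longrightarrow> quasi_poly \<Lambda> (\<lambda>z. f z * g z)"

definition locally_finite_fam :: "('v::euclidean_space set \<times> 'v) set \<Rightarrow> bool" where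
  "locally_finite_fam I \<longleftrightarrow>
     (\<forall>x. \<exists>e>0. finite {p\<in>I.
        (\<Union>s\<in>{0..1::real}. (\<lambda>v. v + s *\<^sub>R snd p) ` fst p) \<inter> ball x e \<noteq> {}})"

text \<open>m has the decomposition (I, q): I is the set of pairs (P,sigma) with P in the
  collection and sigma in Sigma_P.  The sum at each point is over the (finite, by local
  finiteness) set of pairs whose cone contains the point.\<close>
definition is_decomposition ::
  "'v::euclidean_space set \<Rightarrow> (int \<times> 'v \<Rightarrow> complex) \<Rightarrow> ('v set \<times> 'v) set
     \<Rightarrow> ('v set \<Rightarrow> 'v \<Rightarrow> int \<times> 'v \<Rightarrow> complex) \<Rightarrow> bool" where
  "is_decomposition \<Lambda> m I q \<longleftrightarrow>
     (\<forall>(P, \<sigma>)\<in>I. rat_polyhedron \<Lambda> P \<and> \<sigma> \<in> lattice_Q \<Lambda> \<and> quasi_poly \<Lambda> (q P \<sigma>)) \<and>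
     locally_finite_fam I \<and>
     (\<forall>t x. x \<in> \<Lambda> \<longrightarrow>
        m (t, x) = (\<Sum>p\<in>{p\<in>I. in_cone (fst p) (snd p) (t, x)}. q (fst p) (snd p) (t, x)))"

definition in_S :: "'v::euclidean_space set \<Rightarrow> (int \<times> 'v \<Rightarrow> complex) \<Rightarrow> bool" where
  "in_S \<Lambda> m \<longleftrightarrow> (\<exists>I q. is_decomposition \<Lambda> m I q)"

definition rat_poly_cone :: "'v::euclidean_space set \<Rightarrow> 'v set \<Rightarrow> bool" where
  "rat_poly_cone \<Lambda> P \<longleftrightarrow> rat_polyhedron \<Lambda> P \<and>
     (\<exists>w K. P = (\<lambda>v. w + v) ` K \<and> convex_cone K \<and> closed K \<and> polyhedron K)"

definition apex_set :: "'v::euclidean_space set \<Rightarrow> 'v set" where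
  "apex_set P = (SOME L. \<exists>w K. P = (\<lambda>v. w + v) ` K \<and> convex_cone K \<and> closed K \<and>
       polyhedron K \<and> L = (\<lambda>v. w + v) ` (K \<inter> uminus ` K))"

definition polarized :: "'v::euclidean_space \<Rightarrow> real \<Rightarrow> 'v set \<Rightarrow> bool" where
  "polarized a c P \<longleftrightarrow> P \<subseteq> {v. a \<bullet> v \<ge> c} \<and> P \<inter> {v. a \<bullet> v = c} = apex_set P"

definition in_S_pol :: "'v::euclidean_space set \<Rightarrow> (int \<times> 'v \<Rightarrow> complex) \<Rightarrow> bool" where
  "in_S_pol \<Lambda> m \<longleftrightarrow>
     (\<exists>I q. is_decomposition \<Lambda> m I q \<and>
        (\<forall>p\<in>I. rat_poly_cone \<Lambda> (fst p)) \<and>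
        (\<forall>P\<in>fst ` I. apex_set P \<noteq> UNIV \<longrightarrow>
           (\<exists>a c. a \<noteq> 0 \<and>
              (\<forall>P'\<in>fst ` I. apex_set P' = apex_set P \<longrightarrow> polarized a c P'))))"

end

theory Submission
  imports Defs
begin

definition sat :: "('v::euclidean_space \<times> real) \<Rightarrow> 'v \<Rightarrow> bool" where
  "sat h v \<longleftrightarrow> snd h \<le> fst h \<bullet> v"

definition negc :: "('v::euclidean_space \<times> real) \<Rightarrow> 'v \<times> real" where
  "negc h = (- fst h, - snd h)"

definition indepc :: "('v::euclidean_space \<times> real) set \<Rightarrow> bool" where
  "indepc B \<longleftrightarrow> inj_on fst B \<and> independent (fst ` B)"

definition atomset :: "('v::euclidean_space \<times> real) set \<Rightarrow> ('v \<times> real) set \<Rightarrow> 'v set" where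
  "atomset B S = {v. (\<forall>h\<in>B. sat h v) \<and> (\<forall>h\<in>B - S. sat (negc h) v)}"

definition isdual :: "('v::euclidean_space \<times> real) set \<Rightarrow> ('v \<times> real) \<Rightarrow> 'v \<Rightarrow> bool" where
  "isdual B h u \<longleftrightarrow> u \<in> span (fst ` B) \<and> (\<forall>h'\<in>B. fst h' \<bullet> u = (if h' = h then 1 else 0))"

definition dualv :: "('v::euclidean_space \<times> real) set \<Rightarrow> ('v \<times> real) \<Rightarrow> 'v" where
  "dualv B h = (SOME u. isdual B h u)"

definition good :: "'v::euclidean_space \<Rightarrow> ('v \<times> real) set \<Rightarrow> ('v \<times> real) set \<Rightarrow> bool" where
  "good g B S \<longleftrightarrow> (\<forall>s\<in>S. 0 < g \<bullet> dualv B s)"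

definition Wset :: "('v::euclidean_space \<times> real) set \<Rightarrow> 'v set" where
  "Wset B = {k. \<forall>h\<in>B. fst h \<bullet> k = 0}"

definition aW :: "'v::euclidean_space \<Rightarrow> 'v set \<Rightarrow> 'v" where
  "aW g W = (SOME a. (\<forall>x\<in>W. a \<bullet> x = 0) \<and> g - a \<in> W)"

lemma indepc_finite: "indepc B \<Longrightarrow> finite B"
  unfolding indepc_def using independent_bound finite_imageD by blast

lemma indepc_subset: "indepc B \<Longrightarrow> C \<subseteq> B \<Longrightarrow> indepc C"
  unfolding indepc_def by (meson image_mono independent_mono inj_on_subset)

lemma indep_not_in_span:
  assumes "independent T" "b \<in> T" shows "b \<notin> span (T - {b})"
  using assms unfolding dependent_def by blast

lemma ortho_span:
  fixes x :: "'v::euclidean_space"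
  assumes "y \<in> span T" "\<And>t. t \<in> T \<Longrightarrow> t \<bullet> x = 0"
  shows "y \<bullet> x = 0"
proof -
  have "orthogonal x y"
    by (rule orthogonal_to_span[OF assms(1)]) (use assms(2) in \<open>auto simp: orthogonal_def inner_commute\<close>)
  then show ?thesis by (simp add: orthogonal_def inner_commute)
qed

lemma dual_exists:
  assumes "indepc B" "h \<in> B" shows "\<exists>u. isdual B h u"
proof -
  let ?b = "fst h" let ?T = "fst ` B - {fst h}"
  have ind: "independent (fst ` B)" and inj: "inj_on fst B" using assms(1) by (auto simp: indepc_def)
  have nb: "?b \<notin> span ?T" using indep_not_in_span[OF ind] assms(2) by blast
  obtain y z where y: "y \<in> span ?T" and z: "\<And>w. w \<in> span ?T \<Longrightarrow> orthogonal z w" and bz: "?b = y + z"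
    using orthogonal_subspace_decomp_exists by blast
  have "z \<noteq> 0" using nb y bz by auto
  then have zz: "z \<bullet> z > 0" by simp
  have yz: "y \<bullet> z = 0" using z[OF y] by (simp add: orthogonal_def inner_commute)
  have bzz: "?b \<bullet> z = z \<bullet> z" using yz bz by (simp add: inner_add_left)
  define u where "u = inverse (z \<bullet> z) *\<^sub>R z"
  have "z \<in> span (fst ` B)"
  proof -
    have "?b \<in> span (fst ` B)" using assms(2) by (simp add: span_base)
    moreover have "y \<in> span (fst ` B)" using y span_mono[of ?T "fst ` B"] by blast
    ultimately show ?thesis using bz by (metis add_diff_cancel_left' span_diff)
  qed
  then have "u \<in> span (fst ` B)" unfolding u_def by (simp add: span_mul)
  moreover have "\<forall>h'\<in>B. fst h' \<bullet> u = (if h' = h then 1 else 0)"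
  proof
    fix h' assume h': "h' \<in> B"
    show "fst h' \<bullet> u = (if h' = h then 1 else 0)"
    proof (cases "h' = h")
      case True then show ?thesis using bzz zz by (simp add: u_def)
    next
      case False
      then have "fst h' \<noteq> fst h" using inj h' assms(2) by (meson inj_on_def)
      then have "fst h' \<in> span ?T" using h' by (simp add: span_base)
      then have "orthogonal z (fst h')" using z by blast
      then show ?thesis using False by (simp add: u_def orthogonal_def inner_commute)
    qed
  qed
  ultimately show ?thesis unfolding isdual_def by blast
qed

lemma dual_unique:
  assumes "isdual B h u" "isdual B h u'" shows "u = u'"
proof -
  let ?d = "u - u'"
  have d: "?d \<in> span (fst ` B)" using assms by (simp add: isdual_def span_diff)
  have "\<And>t. t \<in> fst ` B \<Longrightarrow> t \<bullet> ?d = 0"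
  proof -
    fix t assume "t \<in> fst ` B"
    then obtain h' where "h' \<in> B" "t = fst h'" by blast
    then show "t \<bullet> ?d = 0" using assms unfolding isdual_def by (simp add: inner_diff_right)
  qed
  then have "?d \<bullet> ?d = 0" using ortho_span[OF d] by blast
  then show ?thesis by simp
qed

lemma dualv:
  assumes "indepc B" "h \<in> B" shows "isdual B h (dualv B h)"
  using dual_exists[OF assms] unfolding dualv_def by (rule someI_ex)

lemma dualv_eq:
  assumes "indepc B" "h \<in> B" "isdual B h u" shows "dualv B h = u"
  using dual_unique[OF dualv[OF assms(1,2)] assms(3)] .

lemma dualv_span: "indepc B \<Longrightarrow> h \<in> B \<Longrightarrow> dualv B h \<in> span (fst ` B)"
  using dualv isdual_def by blast

lemma dualv_inner: "indepc B \<Longrightarrow> h \<in> B \<Longrightarrow> h' \<in> B \<Longrightarrow> fst h' \<bullet> dualv B h = (if h' = h then 1 else 0)"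
  using dualv isdual_def by blast

lemma dualv_nz: "indepc B \<Longrightarrow> h \<in> B \<Longrightarrow> dualv B h \<noteq> 0"
  using dualv_inner[of B h h] by auto

lemma generic_exists:
  fixes Z :: "'v::euclidean_space set"
  assumes "finite Z" shows "\<exists>g. \<forall>z\<in>Z. z \<noteq> 0 \<longrightarrow> g \<bullet> z \<noteq> 0"
  using assms
proof (induction Z rule: finite_induct)
  case empty then show ?case by auto
next
  case (insert z0 Z)
  then obtain g where g: "\<forall>z\<in>Z. z \<noteq> 0 \<longrightarrow> g \<bullet> z \<noteq> 0" by blast
  show ?case
  proof (cases "z0 = 0 \<or> g \<bullet> z0 \<noteq> 0")
    case True then show ?thesis using g by auto
  next
    case False
    then have z0: "z0 \<noteq> 0" "g \<bullet> z0 = 0" by auto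
    let ?Bad = "insert 0 ((\<lambda>z. - (g \<bullet> z) / (z0 \<bullet> z)) ` Z)"
    have "finite ?Bad" using insert by simp
    then obtain e :: real where e: "e \<notin> ?Bad" using ex_new_if_finite[OF infinite_UNIV_char_0] by blast
    have "\<forall>z\<in>insert z0 Z. z \<noteq> 0 \<longrightarrow> (g + e *\<^sub>R z0) \<bullet> z \<noteq> 0"
    proof (intro ballI impI)
      fix z assume z: "z \<in> insert z0 Z" "z \<noteq> 0"
      show "(g + e *\<^sub>R z0) \<bullet> z \<noteq> 0"
      proof (cases "z = z0")
        case True then show ?thesis using z0 e by (simp add: inner_add_left)
      next
        case False
        then have zZ: "z \<in> Z" using z by auto
        show ?thesis
        proof (cases "z0 \<bullet> z = 0")
          case True then show ?thesis using g zZ z by (simp add: inner_add_left)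
        next
          case False
          have "e \<noteq> - (g \<bullet> z) / (z0 \<bullet> z)" using e zZ by auto
          then have "g \<bullet> z + e * (z0 \<bullet> z) \<noteq> 0" using False by (auto simp: field_simps)
          then show ?thesis by (simp add: inner_add_left)
        qed
      qed
    qed
    then show ?thesis by blast
  qed
qed


definition goodP :: "('v::euclidean_space \<times> real) set \<Rightarrow> 'v \<Rightarrow> 'v set \<Rightarrow> bool" where
  "goodP Apm g P \<longleftrightarrow> (\<exists>B S. B \<subseteq> Apm \<and> indepc B \<and> S \<subseteq> B \<and> good g B S \<and> P = atomset B S)"

definition repr :: "('v::euclidean_space \<times> real) set \<Rightarrow> 'v \<Rightarrow> ('v \<Rightarrow> int) \<Rightarrow> bool" where
  "repr Apm g f \<longleftrightarrow> (\<exists>R \<kappa>. finite R \<and> (\<forall>P\<in>R. goodP Apm g P) \<and>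
      (\<forall>v. f v = (\<Sum>P\<in>R. \<kappa> P * of_bool (v \<in> P))))"

lemma repr_zero: "repr Apm g (\<lambda>v. 0)"
  unfolding repr_def by (rule exI[of _ "{}"]) auto

lemma repr_atom: "goodP Apm g P \<Longrightarrow> repr Apm g (\<lambda>v. of_bool (v \<in> P))"
  unfolding repr_def by (rule exI[of _ "{P}"], rule exI[of _ "\<lambda>_. 1"]) auto

lemma sum_if_restrict:
  assumes "finite R" "R1 \<subseteq> R"
  shows "(\<Sum>P\<in>R. (if P \<in> R1 then k P else 0) * b P) = (\<Sum>P\<in>R1. k P * (b P :: int))"
proof -
  have "(\<Sum>P\<in>R. (if P \<in> R1 then k P else 0) * b P) = (\<Sum>P\<in>R. if P \<in> R1 then k P * b P else 0)"
    by (rule sum.cong) auto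
  also have "\<dots> = (\<Sum>P\<in>R \<inter> R1. k P * b P)" using assms(1) by (simp add: sum.inter_restrict)
  also have "R \<inter> R1 = R1" using assms(2) by auto
  finally show ?thesis .
qed

lemma repr_add:
  assumes "repr Apm g f1" "repr Apm g f2" shows "repr Apm g (\<lambda>v. f1 v + f2 v)"
proof -
  obtain R1 k1 where 1: "finite R1" "\<forall>P\<in>R1. goodP Apm g P" "\<forall>v. f1 v = (\<Sum>P\<in>R1. k1 P * of_bool (v \<in> P))"
    using assms(1) unfolding repr_def by blast
  obtain R2 k2 where 2: "finite R2" "\<forall>P\<in>R2. goodP Apm g P" "\<forall>v. f2 v = (\<Sum>P\<in>R2. k2 P * of_bool (v \<in> P))"
    using assms(2) unfolding repr_def by blast
  define k where "k P = (if P \<in> R1 then k1 P else 0) + (if P \<in> R2 then k2 P else 0)" for P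
  have "\<forall>v. f1 v + f2 v = (\<Sum>P\<in>R1 \<union> R2. k P * of_bool (v \<in> P))"
  proof
    fix v
    have "(\<Sum>P\<in>R1 \<union> R2. k P * of_bool (v \<in> P)) =
       (\<Sum>P\<in>R1 \<union> R2. (if P \<in> R1 then k1 P else 0) * of_bool (v \<in> P)) +
       (\<Sum>P\<in>R1 \<union> R2. (if P \<in> R2 then k2 P else 0) * of_bool (v \<in> P))"
      unfolding k_def sum.distrib[symmetric] by (simp only: distrib_right)
    also have "\<dots> = (\<Sum>P\<in>R1. k1 P * of_bool (v \<in> P)) + (\<Sum>P\<in>R2. k2 P * of_bool (v \<in> P))"
    proof -
      have a: "(\<Sum>P\<in>R1 \<union> R2. (if P \<in> R1 then k1 P else 0) * of_bool (v \<in> P)) = (\<Sum>P\<in>R1. k1 P * of_bool (v \<in> P))"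
        by (rule sum_if_restrict) (use 1(1) 2(1) in auto)
      have b: "(\<Sum>P\<in>R1 \<union> R2. (if P \<in> R2 then k2 P else 0) * of_bool (v \<in> P)) = (\<Sum>P\<in>R2. k2 P * of_bool (v \<in> P))"
        by (rule sum_if_restrict) (use 1(1) 2(1) in auto)
      show ?thesis by (simp only: a b)
    qed
    finally show "f1 v + f2 v = (\<Sum>P\<in>R1 \<union> R2. k P * of_bool (v \<in> P))" using 1(3) 2(3) by simp
  qed
  moreover have "finite (R1 \<union> R2)" using 1(1) 2(1) by simp
  moreover have "\<forall>P\<in>R1 \<union> R2. goodP Apm g P" using 1(2) 2(2) by blast
  ultimately show ?thesis unfolding repr_def by blast
qed

lemma repr_scale:
  assumes "repr Apm g f" shows "repr Apm g (\<lambda>v. c * f v)"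
proof -
  obtain R k where 1: "finite R" "\<forall>P\<in>R. goodP Apm g P" "\<forall>v. f v = (\<Sum>P\<in>R. k P * of_bool (v \<in> P))"
    using assms(1) unfolding repr_def by blast
  have "\<forall>v. c * f v = (\<Sum>P\<in>R. (c * k P) * of_bool (v \<in> P))"
  proof
    fix v
    have "c * f v = c * (\<Sum>P\<in>R. k P * of_bool (v \<in> P))" using 1(3) by (simp only:)
    also have "\<dots> = (\<Sum>P\<in>R. c * (k P * of_bool (v \<in> P)))" by (rule sum_distrib_left)
    also have "\<dots> = (\<Sum>P\<in>R. (c * k P) * of_bool (v \<in> P))" by (simp only: mult.assoc)
    finally show "c * f v = (\<Sum>P\<in>R. (c * k P) * of_bool (v \<in> P))" .
  qed
  then show ?thesis unfolding repr_def using 1(1,2) by (intro exI[of _ R] exI[of _ "\<lambda>P. c * k P"] conjI)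
qed

lemma repr_diff:
  assumes "repr Apm g f1" "repr Apm g f2" shows "repr Apm g (\<lambda>v. f1 v - f2 v)"
  using repr_add[OF assms(1) repr_scale[OF assms(2), of "-1"]] by simp

lemma repr_sum:
  assumes "finite X" "\<And>x. x \<in> X \<Longrightarrow> repr Apm g (f x)"
  shows "repr Apm g (\<lambda>v. \<Sum>x\<in>X. f x v)"
  using assms
proof (induction X rule: finite_induct)
  case empty then show ?case using repr_zero by simp
next
  case (insert x X)
  then show ?case using repr_add[of Apm g "f x" "\<lambda>v. \<Sum>x\<in>X. f x v"] by simp
qed

definition nbad :: "'v::euclidean_space \<Rightarrow> ('v \<times> real) set \<Rightarrow> ('v \<times> real) set \<Rightarrow> nat" where
  "nbad g B S = card {s\<in>S. g \<bullet> dualv B s < 0}"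

lemma neg_notin:
  assumes "indepc B" "s \<in> B" shows "- fst s \<notin> fst ` B"
proof
  assume "- fst s \<in> fst ` B"
  then obtain h where h: "h \<in> B" "- fst s = fst h" by force
  have ind: "independent (fst ` B)" and inj: "inj_on fst B" using assms(1) by (auto simp: indepc_def)
  show False
  proof (cases "h = s")
    case True
    then have "fst s + fst s = 0" using h by (metis add.right_inverse)
    then have "(2::real) *\<^sub>R fst s = 0" by (simp add: scaleR_2)
    then have "fst s = 0" by simp
    then have "0 \<in> fst ` B" using assms(2) by force
    then show False using ind dependent_zero by blast
  next
    case False
    then have "fst h \<noteq> fst s" using inj h(1) assms(2) by (meson inj_on_def)
    then have "fst h \<in> fst ` B - {fst s}" using h by auto
    then have "- fst h \<in> span (fst ` B - {fst s})" by (simp add: span_base span_neg)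
    then have "fst s \<in> span (fst ` B - {fst s})" using h(2) by (metis minus_minus)
    then show False using indep_not_in_span[OF ind, of "fst s"] assms(2) by auto
  qed
qed

lemma negc_notin: "indepc B \<Longrightarrow> s \<in> B \<Longrightarrow> negc s \<notin> B"
  using neg_notin by (force simp: negc_def)

lemma flip_indepc:
  assumes "indepc B" "s \<in> B" shows "indepc (insert (negc s) (B - {s}))"
proof -
  have ind: "independent (fst ` B)" and inj: "inj_on fst B" using assms(1) by (auto simp: indepc_def)
  have img: "fst ` (B - {s}) = fst ` B - {fst s}" using inj assms(2) by (auto simp: inj_on_def)
  have n1: "- fst s \<notin> fst ` (B - {s})" using neg_notin[OF assms] by auto
  have n2: "- fst s \<notin> span (fst ` B - {fst s})"
    using indep_not_in_span[OF ind] assms(2) span_neg by fastforce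
  have "independent (fst ` B - {fst s})" using ind by (meson Diff_subset independent_mono)
  then have "independent (insert (- fst s) (fst ` B - {fst s}))" using n2 independent_insertI by blast
  moreover have "inj_on fst (insert (negc s) (B - {s}))"
  proof -
    have "inj_on fst (B - {s})" using inj by (meson Diff_subset inj_on_subset)
    moreover have "fst (negc s) \<notin> fst ` (B - {s} - {negc s})" using n1 by (auto simp: negc_def)
    ultimately show ?thesis by (simp add: inj_on_insert)
  qed
  ultimately show ?thesis unfolding indepc_def using img by (simp add: negc_def)
qed

lemma flip_span:
  assumes "indepc B" "s \<in> B" shows "span (fst ` insert (negc s) (B - {s})) = span (fst ` B)"
proof -
  have a: "fst ` insert (negc s) (B - {s}) = insert (- fst s) (fst ` (B - {s}))" by (simp add: negc_def)
  show ?thesis unfolding a span_eq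
  proof
    show "insert (- fst s) (fst ` (B - {s})) \<subseteq> span (fst ` B)"
      using assms(2) by (auto intro: span_neg span_base)
    show "fst ` B \<subseteq> span (insert (- fst s) (fst ` (B - {s})))"
    proof
      fix x assume "x \<in> fst ` B"
      then obtain h where h: "h \<in> B" "x = fst h" by blast
      show "x \<in> span (insert (- fst s) (fst ` (B - {s})))"
      proof (cases "h = s")
        case True
        have "- (- fst s) \<in> span (insert (- fst s) (fst ` (B - {s})))"
          by (intro span_neg span_base) simp
        then show ?thesis using True h by simp
      next
        case False then show ?thesis using h by (intro span_base) auto
      qed
    qed
  qed
qed

lemma flip_dual_other:
  assumes "indepc B" "s \<in> B" "x \<in> B" "x \<noteq> s"
  shows "dualv (insert (negc s) (B - {s})) x = dualv B x"
proof -
  let ?B' = "insert (negc s) (B - {s})"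
  have "isdual ?B' x (dualv B x)"
    unfolding isdual_def flip_span[OF assms(1,2)]
  proof (intro conjI ballI)
    show "dualv B x \<in> span (fst ` B)" using dualv_span[OF assms(1,3)] .
    fix h' assume h': "h' \<in> ?B'"
    show "fst h' \<bullet> dualv B x = (if h' = x then 1 else 0)"
    proof (cases "h' = negc s")
      case True
      have "negc s \<noteq> x" using negc_notin[OF assms(1,2)] assms(3) by auto
      then show ?thesis using True dualv_inner[OF assms(1,3,2)] assms(4) by (simp add: negc_def)
    next
      case False then show ?thesis using h' dualv_inner[OF assms(1,3)] by auto
    qed
  qed
  then show ?thesis using dualv_eq[OF flip_indepc[OF assms(1,2)], of x] assms(3,4) by auto
qed

lemma flip_dual_self:
  assumes "indepc B" "s \<in> B"
  shows "dualv (insert (negc s) (B - {s})) (negc s) = - dualv B s"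
proof -
  let ?B' = "insert (negc s) (B - {s})"
  have "isdual ?B' (negc s) (- dualv B s)"
    unfolding isdual_def flip_span[OF assms(1,2)]
  proof (intro conjI ballI)
    show "- dualv B s \<in> span (fst ` B)" using dualv_span[OF assms(1,2)] span_neg by blast
    fix h' assume h': "h' \<in> ?B'"
    show "fst h' \<bullet> - dualv B s = (if h' = negc s then 1 else 0)"
    proof (cases "h' = negc s")
      case True
      then show ?thesis using dualv_inner[OF assms(1,2,2)] by (simp add: negc_def)
    next
      case False then show ?thesis using h' dualv_inner[OF assms(1,2)] by auto
    qed
  qed
  then show ?thesis using dualv_eq[OF flip_indepc[OF assms(1,2)], of "negc s"] by auto
qed

lemma flip_identity:
  assumes "s \<in> S" "S \<subseteq> B" "negc s \<notin> B"
  shows "(of_bool (v \<in> atomset B S) :: int) =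
    of_bool (v \<in> atomset (B - {s}) (S - {s}))
    - of_bool (v \<in> atomset (insert (negc s) (B - {s})) (insert (negc s) (S - {s})))
    + of_bool (v \<in> atomset B (S - {s}))"
proof -
  let ?Q = "v \<in> atomset (B - {s}) (S - {s})"
  have e1: "v \<in> atomset B S \<longleftrightarrow> ?Q \<and> sat s v"
    using assms unfolding atomset_def by auto
  have e2: "v \<in> atomset (insert (negc s) (B - {s})) (insert (negc s) (S - {s})) \<longleftrightarrow> ?Q \<and> sat (negc s) v"
    using assms unfolding atomset_def by auto
  have e3: "v \<in> atomset B (S - {s}) \<longleftrightarrow> ?Q \<and> sat s v \<and> sat (negc s) v"
    using assms unfolding atomset_def by auto
  have "sat s v \<or> sat (negc s) v" unfolding sat_def negc_def by auto
  then show ?thesis unfolding e1 e2 e3 by auto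
qed

lemma stage2_step:
  assumes negc_closed: "\<forall>h\<in>Apm. negc h \<in> Apm"
    and gen: "\<forall>B\<subseteq>Apm. indepc B \<longrightarrow> (\<forall>h\<in>B. g \<bullet> dualv B h \<noteq> 0)"
    and B: "B \<subseteq> Apm" "indepc B" "S \<subseteq> B"
    and IH1: "\<And>B' S'. card B' < card B \<Longrightarrow> B' \<subseteq> Apm \<Longrightarrow> indepc B' \<Longrightarrow> S' \<subseteq> B' \<Longrightarrow>
        repr Apm g (\<lambda>v. of_bool (v \<in> atomset B' S'))"
    and IH2: "\<And>B' S'. card B' = card B \<Longrightarrow> card S' < card S \<Longrightarrow> B' \<subseteq> Apm \<Longrightarrow> indepc B' \<Longrightarrow> S' \<subseteq> B' \<Longrightarrow>
        repr Apm g (\<lambda>v. of_bool (v \<in> atomset B' S'))"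
    and IH3: "\<And>B' S'. card B' = card B \<Longrightarrow> card S' = card S \<Longrightarrow> nbad g B' S' < nbad g B S \<Longrightarrow>
        B' \<subseteq> Apm \<Longrightarrow> indepc B' \<Longrightarrow> S' \<subseteq> B' \<Longrightarrow>
        repr Apm g (\<lambda>v. of_bool (v \<in> atomset B' S'))"
  shows "repr Apm g (\<lambda>v. of_bool (v \<in> atomset B S))"
proof (cases "nbad g B S = 0")
  case True
  have finB: "finite B" using indepc_finite B(2) .
  then have finS: "finite S" using B(3) finite_subset by blast
  have "{s\<in>S. g \<bullet> dualv B s < 0} = {}" using True finS unfolding nbad_def by simp
  have "good g B S" unfolding good_def
  proof
    fix s assume s: "s \<in> S"
    then have "g \<bullet> dualv B s \<noteq> 0" using gen B by blast
    moreover have "\<not> g \<bullet> dualv B s < 0" using s \<open>{s\<in>S. g \<bullet> dualv B s < 0} = {}\<close> by blast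
    ultimately show "0 < g \<bullet> dualv B s" by linarith
  qed
  then show ?thesis using B by (intro repr_atom) (auto simp: goodP_def)
next
  case False
  have finB: "finite B" using indepc_finite B(2) .
  then have finS: "finite S" using B(3) finite_subset by blast
  obtain s where s: "s \<in> S" "g \<bullet> dualv B s < 0"
  proof -
    have "{s\<in>S. g \<bullet> dualv B s < 0} \<noteq> {}" using False unfolding nbad_def by (metis card.empty)
    then show ?thesis using that by blast
  qed
  have sB: "s \<in> B" using s B(3) by auto
  have nsB: "negc s \<notin> B" using negc_notin[OF B(2) sB] .
  let ?B' = "insert (negc s) (B - {s})" and ?S' = "insert (negc s) (S - {s})"
  have r1: "repr Apm g (\<lambda>v. of_bool (v \<in> atomset (B - {s}) (S - {s})))"
  proof (rule IH1)
    show "card (B - {s}) < card B" using finB sB by (rule card_Diff1_less)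
  qed (use B in \<open>auto intro: indepc_subset\<close>)
  have indB': "indepc ?B'" using flip_indepc[OF B(2) sB] .
  have cB': "card ?B' = card B"
  proof -
    have "card ?B' = Suc (card (B - {s}))" using nsB finB by (intro card_insert_disjoint) auto
    also have "\<dots> = card B" using finB sB by (rule card_Suc_Diff1)
    finally show ?thesis .
  qed
  have cS': "card ?S' = card S"
  proof -
    have "card ?S' = Suc (card (S - {s}))" using nsB finS B(3) by (intro card_insert_disjoint) auto
    also have "\<dots> = card S" using finS s(1) by (rule card_Suc_Diff1)
    finally show ?thesis .
  qed
  have bad': "{x\<in>?S'. g \<bullet> dualv ?B' x < 0} = {x\<in>S. g \<bullet> dualv B x < 0} - {s}"
  proof -
    have "g \<bullet> dualv ?B' (negc s) > 0" using flip_dual_self[OF B(2) sB] s(2) by simp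
    moreover have "\<And>x. x \<in> S - {s} \<Longrightarrow> dualv ?B' x = dualv B x"
      using flip_dual_other[OF B(2) sB] B(3) by auto
    ultimately show ?thesis by auto
  qed
  have nb: "nbad g ?B' ?S' < nbad g B S"
    unfolding nbad_def bad' using finS s by (intro card_Diff1_less) auto
  have r2: "repr Apm g (\<lambda>v. of_bool (v \<in> atomset ?B' ?S'))"
    using IH3[OF cB' cS' nb] B negc_closed sB indB' by auto
  have r3: "repr Apm g (\<lambda>v. of_bool (v \<in> atomset B (S - {s})))"
  proof (rule IH2)
    show "card (S - {s}) < card S" using finS s(1) by (rule card_Diff1_less)
  qed (use B in auto)
  have "repr Apm g (\<lambda>v. of_bool (v \<in> atomset (B - {s}) (S - {s})) - of_bool (v \<in> atomset ?B' ?S')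
      + of_bool (v \<in> atomset B (S - {s})))"
    by (intro repr_add repr_diff r1 r2 r3)
  then show ?thesis using flip_identity[OF s(1) B(3) nsB] by simp
qed

lemma stage2:
  assumes negc_closed: "\<forall>h\<in>Apm. negc h \<in> Apm"
    and gen: "\<forall>B\<subseteq>Apm. indepc B \<longrightarrow> (\<forall>h\<in>B. g \<bullet> dualv B h \<noteq> 0)"
  shows "B \<subseteq> Apm \<Longrightarrow> indepc B \<Longrightarrow> S \<subseteq> B \<Longrightarrow> repr Apm g (\<lambda>v. of_bool (v \<in> atomset B S))"
proof -
  have "\<forall>B S. card B = n \<longrightarrow> B \<subseteq> Apm \<longrightarrow> indepc B \<longrightarrow> S \<subseteq> B \<longrightarrow> repr Apm g (\<lambda>v. of_bool (v \<in> atomset B S))" for n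
  proof (induction n rule: less_induct)
    case (less n)
    note IHn = less.IH
    have "\<forall>B S. card B = n \<longrightarrow> card S = k \<longrightarrow> B \<subseteq> Apm \<longrightarrow> indepc B \<longrightarrow> S \<subseteq> B \<longrightarrow> repr Apm g (\<lambda>v. of_bool (v \<in> atomset B S))" for k
    proof (induction k rule: less_induct)
      case (less k)
      note IHk = less.IH
      have "\<forall>B S. card B = n \<longrightarrow> card S = k \<longrightarrow> nbad g B S = b \<longrightarrow> B \<subseteq> Apm \<longrightarrow> indepc B \<longrightarrow> S \<subseteq> B \<longrightarrow> repr Apm g (\<lambda>v. of_bool (v \<in> atomset B S))" for b
      proof (induction b rule: less_induct)
        case (less b)
        show ?case
        proof (intro allI impI)
          fix B S assume h: "card B = n" "card S = k" "nbad g B S = b" "B \<subseteq> Apm" "indepc B" "S \<subseteq> B"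
          show "repr Apm g (\<lambda>v. of_bool (v \<in> atomset B S))"
          proof (rule stage2_step[OF negc_closed gen h(4-6)])
            fix B' S' assume "card B' < card B" "B' \<subseteq> Apm" "indepc B'" "S' \<subseteq> B'"
            then show "repr Apm g (\<lambda>v. of_bool (v \<in> atomset B' S'))"
              using IHn h(1) by blast
          next
            fix B' S' assume "card B' = card B" "card S' < card S" "B' \<subseteq> Apm" "indepc B'" "S' \<subseteq> B'"
            then show "repr Apm g (\<lambda>v. of_bool (v \<in> atomset B' S'))"
              using IHk h(1,2) by blast
          next
            fix B' S' assume "card B' = card B" "card S' = card S" "nbad g B' S' < nbad g B S"
              "B' \<subseteq> Apm" "indepc B'" "S' \<subseteq> B'"
            then show "repr Apm g (\<lambda>v. of_bool (v \<in> atomset B' S'))"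
              using less.IH h(1-3) by blast
          qed
        qed
      qed
      then show ?case by blast
    qed
    then show ?case by blast
  qed
  then show "B \<subseteq> Apm \<Longrightarrow> indepc B \<Longrightarrow> S \<subseteq> B \<Longrightarrow> repr Apm g (\<lambda>v. of_bool (v \<in> atomset B S))" by blast
qed


lemma alt_sum:
  assumes "finite X" "X \<noteq> {}" shows "(\<Sum>U\<in>Pow X. (-1::int) ^ card U) = 0"
proof -
  obtain x where x: "x \<in> X" using assms(2) by blast
  define Y where "Y = X - {x}"
  have X: "X = insert x Y" and xY: "x \<notin> Y" and finY: "finite Y" using x assms(1) by (auto simp: Y_def)
  have P: "Pow X = Pow Y \<union> insert x ` Pow Y" unfolding X by (rule Pow_insert)
  have disj: "Pow Y \<inter> insert x ` Pow Y = {}" using xY by auto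
  have inj: "inj_on (insert x) (Pow Y)" using xY unfolding inj_on_def by (metis PowD insert_ident subset_iff)
  have "(\<Sum>U\<in>Pow X. (-1::int) ^ card U) = (\<Sum>U\<in>Pow Y. (-1::int) ^ card U) + (\<Sum>U\<in>insert x ` Pow Y. (-1::int) ^ card U)"
    unfolding P using finY disj by (intro sum.union_disjoint) auto
  also have "(\<Sum>U\<in>insert x ` Pow Y. (-1::int) ^ card U) = (\<Sum>U\<in>Pow Y. (-1::int) ^ card (insert x U))"
    using inj by (simp add: sum.reindex)
  also have "\<dots> = (\<Sum>U\<in>Pow Y. - ((-1::int) ^ card U))"
  proof (rule sum.cong)
    fix U assume "U \<in> Pow Y"
    then have "finite U" "x \<notin> U" using finY xY finite_subset by auto
    then show "(-1::int) ^ card (insert x U) = - ((-1::int) ^ card U)" by simp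
  qed simp
  finally show ?thesis by (simp add: sum_negf)
qed

lemma sign_split:
  assumes "finite F" "U \<subseteq> F"
  shows "(-1::int) ^ card (F - U) = (-1) ^ card F * (-1) ^ card U"
proof -
  have "card F = card (F - U) + card U"
    using assms by (metis card_Diff_subset card_mono finite_subset le_add_diff_inverse2)
  then have "(-1::int) ^ card F * (-1) ^ card U = (-1) ^ card (F - U) * ((-1) ^ card U * (-1) ^ card U)"
    by (simp add: power_add mult.assoc)
  also have "(-1::int) ^ card U * (-1) ^ card U = 1" by (simp add: power_add[symmetric])
  finally show ?thesis by simp
qed

lemma IE_identity:
  fixes \<psi> :: "'c \<Rightarrow> real"
  assumes finG: "finite G" and rel: "(\<Sum>h\<in>G. \<mu> h * \<psi> h) = \<gamma>"
    and Fp: "Fp = {h\<in>G. \<mu> h > 0}"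
    and sgn: "\<gamma> > 0 \<or> (\<gamma> = 0 \<and> Fp \<noteq> {})"
  shows "(of_bool (\<forall>h\<in>G. 0 \<le> \<psi> h) :: int) =
    (\<Sum>U\<in>Pow Fp - {Fp}. - ((-1) ^ card (Fp - U)) * of_bool (\<forall>h\<in>G - (Fp - U). 0 \<le> \<psi> h))"
proof (cases "\<exists>h\<in>G - Fp. \<psi> h < 0")
  case True
  then obtain h0 where h0: "h0 \<in> G - Fp" "\<psi> h0 < 0" by blast
  have "\<forall>U\<in>Pow Fp - {Fp}. - ((-1) ^ card (Fp - U)) * (of_bool (\<forall>h\<in>G - (Fp - U). 0 \<le> \<psi> h) :: int) = 0"
  proof
    fix U assume "U \<in> Pow Fp - {Fp}"
    have "h0 \<in> G - (Fp - U)" using h0 by blast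
    then have "\<not> (\<forall>h\<in>G - (Fp - U). 0 \<le> \<psi> h)" using h0(2) by force
    then show "- ((-1) ^ card (Fp - U)) * (of_bool (\<forall>h\<in>G - (Fp - U). 0 \<le> \<psi> h) :: int) = 0" by simp
  qed
  then have "(\<Sum>U\<in>Pow Fp - {Fp}. - ((-1) ^ card (Fp - U)) * (of_bool (\<forall>h\<in>G - (Fp - U). 0 \<le> \<psi> h) :: int)) = 0"
    by (intro sum.neutral) blast
  moreover have "\<not> (\<forall>h\<in>G. 0 \<le> \<psi> h)" using h0 by (meson DiffD1 not_le)
  ultimately show ?thesis by simp
next
  case False
  then have rest: "\<forall>h\<in>G - Fp. 0 \<le> \<psi> h" by (meson not_le)
  have FpG: "Fp \<subseteq> G" using Fp by auto
  have finFp: "finite Fp" using finG FpG finite_subset by blast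
  define X where "X = {h\<in>Fp. 0 \<le> \<psi> h}"
  have XFp: "X \<subseteq> Fp" unfolding X_def by auto
  have finX: "finite X" using finFp XFp finite_subset by blast
  have Xne: "X \<noteq> {}"
  proof
    assume X0: "X = {}"
    have neg: "\<forall>h\<in>Fp. \<mu> h * \<psi> h < 0"
    proof
      fix h assume h: "h \<in> Fp"
      then have "\<psi> h < 0" using X0 unfolding X_def by auto
      moreover have "\<mu> h > 0" using h Fp by auto
      ultimately show "\<mu> h * \<psi> h < 0" by (simp add: mult_pos_neg)
    qed
    have s1: "(\<Sum>h\<in>Fp. \<mu> h * \<psi> h) \<le> 0" using neg by (intro sum_nonpos) (auto intro: less_imp_le)
    have s1': "Fp \<noteq> {} \<Longrightarrow> (\<Sum>h\<in>Fp. \<mu> h * \<psi> h) < 0"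
    proof -
      assume ne: "Fp \<noteq> {}"
      have "(\<Sum>h\<in>Fp. \<mu> h * \<psi> h) < (\<Sum>h\<in>Fp. 0)" using neg finFp ne by (intro sum_strict_mono) auto
      then show ?thesis by simp
    qed
    have s2: "(\<Sum>h\<in>G - Fp. \<mu> h * \<psi> h) \<le> 0"
    proof (intro sum_nonpos)
      fix h assume h: "h \<in> G - Fp"
      then have "\<mu> h \<le> 0" using Fp by auto
      moreover have "0 \<le> \<psi> h" using rest h by auto
      ultimately show "\<mu> h * \<psi> h \<le> 0" by (simp add: mult_nonpos_nonneg)
    qed
    have split: "(\<Sum>h\<in>G. \<mu> h * \<psi> h) = (\<Sum>h\<in>Fp. \<mu> h * \<psi> h) + (\<Sum>h\<in>G - Fp. \<mu> h * \<psi> h)"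
      using finG FpG by (metis add.commute sum.subset_diff)
    show False using sgn rel split s1 s1' s2 by force
  qed
  have termU: "\<And>U. U \<in> Pow Fp \<Longrightarrow> (\<forall>h\<in>G - (Fp - U). 0 \<le> \<psi> h) \<longleftrightarrow> U \<subseteq> X"
    using rest FpG unfolding X_def by blast
  have lhs: "(\<forall>h\<in>G. 0 \<le> \<psi> h) \<longleftrightarrow> X = Fp"
    using rest XFp FpG unfolding X_def by blast
  have "(\<Sum>U\<in>Pow Fp - {Fp}. - ((-1) ^ card (Fp - U)) * (of_bool (\<forall>h\<in>G - (Fp - U). 0 \<le> \<psi> h) :: int))
      = (\<Sum>U\<in>Pow Fp - {Fp}. if U \<in> Pow X then - ((-1) ^ card Fp * (-1) ^ card U) else 0)"
  proof (rule sum.cong)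
    fix U assume U: "U \<in> Pow Fp - {Fp}"
    then show "- ((-1) ^ card (Fp - U)) * (of_bool (\<forall>h\<in>G - (Fp - U). 0 \<le> \<psi> h) :: int) =
       (if U \<in> Pow X then - ((-1) ^ card Fp * (-1) ^ card U) else 0)"
      using termU[of U] sign_split[OF finFp, of U] by auto
  qed simp
  also have "\<dots> = (\<Sum>U\<in>(Pow Fp - {Fp}) \<inter> Pow X. - ((-1) ^ card Fp * (-1) ^ card U))"
    using finFp by (simp add: sum.inter_restrict)
  also have "\<dots> = of_bool (X = Fp)"
  proof (cases "X = Fp")
    case True
    have "(Pow Fp - {Fp}) \<inter> Pow X = Pow Fp - {Fp}" using True by auto
    moreover have "(\<Sum>U\<in>Pow Fp - {Fp}. - ((-1::int) ^ card Fp * (-1) ^ card U))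
        = - ((-1) ^ card Fp * ((\<Sum>U\<in>Pow Fp. (-1) ^ card U) - (-1) ^ card Fp))"
    proof -
      have "(\<Sum>U\<in>Pow Fp. (-1::int) ^ card U) = (-1) ^ card Fp + (\<Sum>U\<in>Pow Fp - {Fp}. (-1) ^ card U)"
        using finFp by (intro sum.remove) auto
      then show ?thesis by (simp add: sum_negf sum_distrib_left[symmetric])
    qed
    moreover have "(\<Sum>U\<in>Pow Fp. (-1::int) ^ card U) = 0" using alt_sum finFp True Xne by blast
    moreover have "(-1::int) ^ card Fp * (-1) ^ card Fp = 1" by (simp add: power_add[symmetric])
    ultimately show ?thesis using True by simp
  next
    case False
    then have "(Pow Fp - {Fp}) \<inter> Pow X = Pow X" using XFp by auto
    moreover have "(\<Sum>U\<in>Pow X. - ((-1::int) ^ card Fp * (-1) ^ card U)) = - ((-1) ^ card Fp * (\<Sum>U\<in>Pow X. (-1) ^ card U))"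
      by (simp add: sum_negf sum_distrib_left)
    moreover have "(\<Sum>U\<in>Pow X. (-1::int) ^ card U) = 0" using alt_sum finX Xne by blast
    ultimately show ?thesis using False by simp
  qed
  finally show ?thesis using lhs by simp
qed

lemma not_indepc_rel:
  assumes "finite G" "\<not> indepc G"
  shows "\<exists>\<mu>. (\<Sum>h\<in>G. \<mu> h *\<^sub>R fst h) = 0 \<and> (\<exists>h\<in>G. \<mu> h \<noteq> 0)"
proof (cases "inj_on fst G")
  case False
  then obtain x y where xy: "x \<in> G" "y \<in> G" "x \<noteq> y" "fst x = fst y" unfolding inj_on_def by blast
  define \<mu> where "\<mu> h = (if h = x then 1 else if h = y then -1 else (0::real))" for h
  have "(\<Sum>h\<in>G. \<mu> h *\<^sub>R fst h) = \<mu> x *\<^sub>R fst x + (\<Sum>h\<in>G - {x}. \<mu> h *\<^sub>R fst h)"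
    using assms(1) xy(1) by (rule sum.remove)
  also have "(\<Sum>h\<in>G - {x}. \<mu> h *\<^sub>R fst h) = \<mu> y *\<^sub>R fst y + (\<Sum>h\<in>G - {x} - {y}. \<mu> h *\<^sub>R fst h)"
    using assms(1) xy by (intro sum.remove) auto
  also have "(\<Sum>h\<in>G - {x} - {y}. \<mu> h *\<^sub>R fst h) = 0"
    by (intro sum.neutral) (auto simp: \<mu>_def)
  finally have "(\<Sum>h\<in>G. \<mu> h *\<^sub>R fst h) = 0" using xy by (simp add: \<mu>_def)
  moreover have "\<mu> x \<noteq> 0" by (simp add: \<mu>_def)
  ultimately show ?thesis using xy(1) by blast
next
  case True
  then have "dependent (fst ` G)" using assms(2) unfolding indepc_def by blast
  then obtain u where u: "\<exists>v\<in>fst ` G. u v \<noteq> 0" "(\<Sum>v\<in>fst ` G. u v *\<^sub>R v) = 0"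
    using dependent_finite[of "fst ` G"] assms(1) by auto
  have "(\<Sum>h\<in>G. u (fst h) *\<^sub>R fst h) = 0" using u(2) True by (simp add: sum.reindex)
  moreover have "\<exists>h\<in>G. u (fst h) \<noteq> 0" using u(1) by blast
  ultimately show ?thesis by (intro exI[of _ "\<lambda>h. u (fst h)"]) blast
qed

lemma repr_cong: "repr Apm g f \<Longrightarrow> (\<And>v. f v = f' v) \<Longrightarrow> repr Apm g f'"
proof -
  assume "repr Apm g f" "\<And>v. f v = f' v"
  moreover have "f = f'" using calculation(2) by (rule ext)
  ultimately show ?thesis by simp
qed

lemma stage1:
  assumes negc_closed: "\<forall>h\<in>Apm. negc h \<in> Apm"
    and gen: "\<forall>B\<subseteq>Apm. indepc B \<longrightarrow> (\<forall>h\<in>B. g \<bullet> dualv B h \<noteq> 0)"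
    and finA: "finite Apm"
  shows "G \<subseteq> Apm \<Longrightarrow> repr Apm g (\<lambda>v. of_bool (\<forall>h\<in>G. sat h v))"
proof (induction "card G" arbitrary: G rule: less_induct)
  case less
  have finG: "finite G" using less.prems finA finite_subset by blast
  show ?case
  proof (cases "indepc G")
    case True
    have "repr Apm g (\<lambda>v. of_bool (v \<in> atomset G G))"
      using stage2[OF negc_closed gen less.prems True] by blast
    moreover have "\<And>v. v \<in> atomset G G \<longleftrightarrow> (\<forall>h\<in>G. sat h v)" unfolding atomset_def by auto
    ultimately show ?thesis by simp
  next
    case False
    obtain \<mu>0 where m0: "(\<Sum>h\<in>G. \<mu>0 h *\<^sub>R fst h) = 0" "\<exists>h\<in>G. \<mu>0 h \<noteq> 0"
      using not_indepc_rel[OF finG False] by blast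
    define \<gamma>0 where "\<gamma>0 = - (\<Sum>h\<in>G. \<mu>0 h * snd h)"
    define pos where "pos = (\<gamma>0 > 0 \<or> (\<gamma>0 = 0 \<and> (\<exists>h\<in>G. \<mu>0 h > 0)))"
    define \<mu> where "\<mu> h = (if pos then \<mu>0 h else - \<mu>0 h)" for h
    define \<gamma> where "\<gamma> = - (\<Sum>h\<in>G. \<mu> h * snd h)"
    define Fp where "Fp = {h\<in>G. \<mu> h > 0}"
    have m1: "(\<Sum>h\<in>G. \<mu> h *\<^sub>R fst h) = 0"
      using m0(1) by (cases pos) (auto simp: \<mu>_def sum_negf)
    have g1: "\<gamma> = (if pos then \<gamma>0 else - \<gamma>0)"
      unfolding \<gamma>_def \<gamma>0_def \<mu>_def by (cases pos) (auto simp: sum_negf)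
    have sgn: "\<gamma> > 0 \<or> (\<gamma> = 0 \<and> Fp \<noteq> {})"
    proof (cases pos)
      case True
      then show ?thesis using g1 unfolding pos_def Fp_def \<mu>_def by auto
    next
      case False
      then have "\<gamma>0 < 0 \<or> (\<gamma>0 = 0 \<and> (\<forall>h\<in>G. \<mu>0 h \<le> 0))" unfolding pos_def by auto
      then show ?thesis
      proof
        assume "\<gamma>0 < 0" then show ?thesis using g1 False by auto
      next
        assume a: "\<gamma>0 = 0 \<and> (\<forall>h\<in>G. \<mu>0 h \<le> 0)"
        obtain h where h: "h \<in> G" "\<mu>0 h \<noteq> 0" using m0(2) by blast
        then have "\<mu>0 h < 0" using a by force
        then have "h \<in> Fp" using h False unfolding Fp_def \<mu>_def by auto
        then show ?thesis using a g1 False by auto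
      qed
    qed
    have ident: "(of_bool (\<forall>h\<in>G. sat h v) :: int) =
      (\<Sum>U\<in>Pow Fp - {Fp}. - ((-1) ^ card (Fp - U)) * of_bool (\<forall>h\<in>G - (Fp - U). sat h v))" for v
    proof -
      have rel: "(\<Sum>h\<in>G. \<mu> h * (fst h \<bullet> v - snd h)) = \<gamma>"
      proof -
        have "(\<Sum>h\<in>G. \<mu> h * (fst h \<bullet> v - snd h)) = (\<Sum>h\<in>G. \<mu> h *\<^sub>R fst h) \<bullet> v - (\<Sum>h\<in>G. \<mu> h * snd h)"
          by (simp add: inner_sum_left right_diff_distrib sum_subtractf)
        then show ?thesis using m1 unfolding \<gamma>_def by simp
      qed
      have sat_iff: "\<And>h. sat h v \<longleftrightarrow> 0 \<le> fst h \<bullet> v - snd h" unfolding sat_def by auto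
      show ?thesis unfolding sat_iff by (rule IE_identity[OF finG rel Fp_def sgn])
    qed
    have "repr Apm g (\<lambda>v. \<Sum>U\<in>Pow Fp - {Fp}. - ((-1) ^ card (Fp - U)) * of_bool (\<forall>h\<in>G - (Fp - U). sat h v))"
    proof (rule repr_sum)
      show "finite (Pow Fp - {Fp})" using finG unfolding Fp_def by simp
      fix U assume U: "U \<in> Pow Fp - {Fp}"
      have "Fp - U \<noteq> {}" using U by auto
      moreover have "Fp - U \<subseteq> G" unfolding Fp_def by auto
      ultimately have "G - (Fp - U) \<subset> G" by blast
      then have "card (G - (Fp - U)) < card G" using finG by (simp add: psubset_card_mono)
      then have "repr Apm g (\<lambda>v. of_bool (\<forall>h\<in>G - (Fp - U). sat h v))"
        using less.hyps less.prems by blast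
      then show "repr Apm g (\<lambda>v. - ((-1) ^ card (Fp - U)) * of_bool (\<forall>h\<in>G - (Fp - U). sat h v))"
        by (rule repr_scale)
    qed
    then show ?thesis by (rule repr_cong) (rule ident[symmetric])
  qed
qed


lemma translate_mem: "(x::'a::ab_group_add) \<in> (\<lambda>v. w + v) ` K \<longleftrightarrow> x - w \<in> K"
proof
  assume "x \<in> (\<lambda>v. w + v) ` K"
  then obtain k where "k \<in> K" "x = w + k" by blast
  then show "x - w \<in> K" by simp
next
  assume "x - w \<in> K"
  moreover have "x = w + (x - w)" by simp
  ultimately show "x \<in> (\<lambda>v. w + v) ` K" by (rule rev_image_eqI)
qed

lemma uminus_mem: "(x::'a::ab_group_add) \<in> uminus ` K \<longleftrightarrow> - x \<in> K"
proof
  assume "x \<in> uminus ` K"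
  then obtain k where "k \<in> K" "x = - k" by blast
  then show "- x \<in> K" by simp
next
  assume "- x \<in> K"
  moreover have "x = - (- x)" by simp
  ultimately show "x \<in> uminus ` K" by (rule rev_image_eqI)
qed

lemma apex_welldef:
  fixes K K' :: "'v::euclidean_space set"
  assumes P1: "P = (\<lambda>v. w + v) ` K" and c1: "convex_cone K"
    and P2: "P = (\<lambda>v. w' + v) ` K'" and c2: "convex_cone K'"
  shows "(\<lambda>v. w + v) ` (K \<inter> uminus ` K) \<subseteq> (\<lambda>v. w' + v) ` (K' \<inter> uminus ` K')"
proof
  define d where "d = w - w'"
  have A: "\<And>k. k \<in> K \<Longrightarrow> d + k \<in> K'"
  proof -
    fix k assume "k \<in> K"
    then have "w + k \<in> P" using P1 by blast
    then have "w + k - w' \<in> K'" using P2 translate_mem by blast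
    then show "d + k \<in> K'" by (simp add: d_def algebra_simps)
  qed
  have Bk: "\<And>k'. k' \<in> K' \<Longrightarrow> k' - d \<in> K"
  proof -
    fix k' assume "k' \<in> K'"
    then have "w' + k' \<in> P" using P2 by blast
    then have "w' + k' - w \<in> K" using P1 translate_mem by blast
    then show "k' - d \<in> K" by (simp add: d_def algebra_simps)
  qed
  have "0 - d \<in> K" using Bk convex_cone_contains_0[OF c2] by blast
  then have md: "- d \<in> K" by simp
  have "d + 0 \<in> K'" using A convex_cone_contains_0[OF c1] by blast
  then have "(2::real) *\<^sub>R d \<in> K'" using convex_cone_scaleR[OF c2, of 2] by simp
  then have "(2::real) *\<^sub>R d - d \<in> K" using Bk by blast
  then have dK: "d \<in> K" by (simp add: scaleR_2)
  fix x assume "x \<in> (\<lambda>v. w + v) ` (K \<inter> uminus ` K)"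
  then obtain k where k: "k \<in> K" "- k \<in> K" "x = w + k" by (auto simp: uminus_mem)
  have "(- d) + (- d) \<in> K" using md c1 by (simp only: convex_cone_add)
  then have "- k + ((- d) + (- d)) \<in> K" using k(2) c1 by (simp only: convex_cone_add)
  then have "d + (- k + ((- d) + (- d))) \<in> K'" using A by blast
  then have m: "- (d + k) \<in> K'" by (simp add: algebra_simps)
  have "d + k \<in> K'" using A k by blast
  moreover have "x = w' + (d + k)" using k by (simp add: d_def)
  ultimately show "x \<in> (\<lambda>v. w' + v) ` (K' \<inter> uminus ` K')" using m by (auto simp: uminus_mem)
qed

lemma apex_of:
  fixes K :: "'v::euclidean_space set"
  assumes "P = (\<lambda>v. w + v) ` K" "convex_cone K" "closed K" "polyhedron K"
  shows "apex_set P = (\<lambda>v. w + v) ` (K \<inter> uminus ` K)"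
proof -
  let ?Q = "\<lambda>L. \<exists>w K. P = (\<lambda>v. w + v) ` K \<and> convex_cone K \<and> closed K \<and>
       polyhedron K \<and> L = (\<lambda>v. w + v) ` (K \<inter> uminus ` K)"
  have "?Q ((\<lambda>v. w + v) ` (K \<inter> uminus ` K))" using assms by blast
  then have "?Q (apex_set P)" unfolding apex_set_def by (rule someI)
  then obtain w' K' where h: "P = (\<lambda>v. w' + v) ` K'" "convex_cone K'"
    "apex_set P = (\<lambda>v. w' + v) ` (K' \<inter> uminus ` K')" by blast
  show ?thesis unfolding h(3)
    using apex_welldef[OF assms(1,2) h(1,2)] apex_welldef[OF h(1,2) assms(1,2)] by blast
qed

definition hsF :: "('v::euclidean_space \<times> real) set \<Rightarrow> ('v \<times> real) set \<Rightarrow> 'v set set" where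
  "hsF B S = (\<lambda>h. {k. fst h \<bullet> k \<ge> 0}) ` B \<union> (\<lambda>h. {k. fst h \<bullet> k \<le> 0}) ` (B - S)"

definition Kc :: "('v::euclidean_space \<times> real) set \<Rightarrow> ('v \<times> real) set \<Rightarrow> 'v set" where
  "Kc B S = \<Inter> (hsF B S)"

lemma Kc_mem: "k \<in> Kc B S \<longleftrightarrow> (\<forall>h\<in>B. 0 \<le> fst h \<bullet> k) \<and> (\<forall>h\<in>B - S. fst h \<bullet> k \<le> 0)"
  unfolding Kc_def hsF_def by auto

lemma Kc_props:
  assumes "finite B"
  shows "convex_cone (Kc B S)" "closed (Kc B S)" "polyhedron (Kc B S)"
proof -
  have fin: "finite (hsF B S)" using assms unfolding hsF_def by simp
  show "convex_cone (Kc B S)" unfolding Kc_def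
    by (rule convex_cone_Inter) (auto simp: hsF_def convex_cone_halfspace_ge convex_cone_halfspace_le)
  show "closed (Kc B S)" unfolding Kc_def
    by (rule closed_Inter) (auto simp: hsF_def closed_halfspace_ge closed_halfspace_le)
  show "polyhedron (Kc B S)" unfolding Kc_def
    using fin by (rule polyhedron_Inter) (auto simp: hsF_def polyhedron_halfspace_ge polyhedron_halfspace_le)
qed

lemma Kc_lineal: "Kc B S \<inter> uminus ` Kc B S = Wset B"
proof (rule set_eqI)
  fix k
  have "k \<in> Kc B S \<inter> uminus ` Kc B S \<longleftrightarrow> k \<in> Kc B S \<and> - k \<in> Kc B S" using uminus_mem[of k] by blast
  also have "\<dots> \<longleftrightarrow> k \<in> Wset B"
  proof
    assume a: "k \<in> Kc B S \<and> - k \<in> Kc B S"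
    show "k \<in> Wset B" unfolding Wset_def
    proof (intro CollectI ballI)
      fix h assume "h \<in> B"
      then have "0 \<le> fst h \<bullet> k" "0 \<le> fst h \<bullet> (- k)" using a Kc_mem by blast+
      then show "fst h \<bullet> k = 0" by (simp add: inner_minus_right)
    qed
  next
    assume "k \<in> Wset B"
    then have "\<forall>h\<in>B. fst h \<bullet> k = 0" unfolding Wset_def by blast
    then show "k \<in> Kc B S \<and> - k \<in> Kc B S" unfolding Kc_mem by (simp add: inner_minus_right)
  qed
  finally show "k \<in> Kc B S \<inter> uminus ` Kc B S \<longleftrightarrow> k \<in> Wset B" .
qed

definition w0 :: "('v::euclidean_space \<times> real) set \<Rightarrow> 'v" where
  "w0 B = (\<Sum>h\<in>B. snd h *\<^sub>R dualv B h)"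

lemma w0_inner:
  assumes "indepc B" "h' \<in> B" shows "fst h' \<bullet> w0 B = snd h'"
proof -
  have "fst h' \<bullet> w0 B = (\<Sum>h\<in>B. snd h * (fst h' \<bullet> dualv B h))"
    unfolding w0_def by (simp add: inner_sum_right)
  also have "\<dots> = (\<Sum>h\<in>B. if h = h' then snd h else 0)"
    by (rule sum.cong) (auto simp: dualv_inner[OF assms(1) _ assms(2)])
  also have "\<dots> = snd h'" using indepc_finite[OF assms(1)] assms(2) by simp
  finally show ?thesis .
qed

lemma atom_translate:
  assumes "indepc B" shows "atomset B S = (\<lambda>v. w0 B + v) ` Kc B S"
proof (rule set_eqI)
  fix v
  have "\<And>h. h \<in> B \<Longrightarrow> fst h \<bullet> (v - w0 B) = fst h \<bullet> v - snd h"
    using w0_inner[OF assms] by (simp add: inner_diff_right)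
  then show "v \<in> atomset B S \<longleftrightarrow> v \<in> (\<lambda>v. w0 B + v) ` Kc B S"
    unfolding translate_mem Kc_mem atomset_def sat_def negc_def by auto
qed

lemma atom_apex:
  assumes "indepc B" shows "apex_set (atomset B S) = (\<lambda>v. w0 B + v) ` Wset B"
proof -
  have fin: "finite B" using assms by (rule indepc_finite)
  have "apex_set (atomset B S) = (\<lambda>v. w0 B + v) ` (Kc B S \<inter> uminus ` Kc B S)"
    by (rule apex_of[OF atom_translate[OF assms] Kc_props[OF fin]])
  also have "Kc B S \<inter> uminus ` Kc B S = Wset B" by (rule Kc_lineal)
  finally show ?thesis .
qed

lemma aW_props:
  assumes "indepc B"
  shows "(\<forall>x\<in>Wset B. aW g (Wset B) \<bullet> x = 0) \<and> g - aW g (Wset B) \<in> Wset B"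
proof -
  obtain y z where y: "y \<in> span (fst ` B)" and z: "\<And>w. w \<in> span (fst ` B) \<Longrightarrow> orthogonal z w" and gz: "g = y + z"
    using orthogonal_subspace_decomp_exists by blast
  have "\<forall>x\<in>Wset B. y \<bullet> x = 0"
  proof
    fix x assume "x \<in> Wset B"
    then have "\<And>t. t \<in> fst ` B \<Longrightarrow> t \<bullet> x = 0" unfolding Wset_def by auto
    then show "y \<bullet> x = 0" using ortho_span[OF y] by blast
  qed
  moreover have "g - y \<in> Wset B" unfolding Wset_def
  proof (intro CollectI ballI)
    fix h assume "h \<in> B"
    then have "fst h \<in> span (fst ` B)" by (simp add: span_base)
    then have "orthogonal z (fst h)" using z by blast
    then show "fst h \<bullet> (g - y) = 0" using gz by (simp add: orthogonal_def inner_commute)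
  qed
  ultimately have "\<exists>a. (\<forall>x\<in>Wset B. a \<bullet> x = 0) \<and> g - a \<in> Wset B" by blast
  then show ?thesis unfolding aW_def by (rule someI_ex)
qed

lemma aW_dual:
  assumes "indepc B" "h \<in> B" shows "aW g (Wset B) \<bullet> dualv B h = g \<bullet> dualv B h"
proof -
  have gw: "g - aW g (Wset B) \<in> Wset B" using aW_props[OF assms(1)] by blast
  have "dualv B h \<bullet> (g - aW g (Wset B)) = 0"
    using ortho_span[OF dualv_span[OF assms]] gw unfolding Wset_def by auto
  then show ?thesis by (simp add: inner_diff_right inner_commute)
qed

lemma Kc_decomp:
  assumes "indepc B" "S \<subseteq> B" "k \<in> Kc B S" "good g B S"
  shows "aW g (Wset B) \<bullet> k \<ge> 0" "aW g (Wset B) \<bullet> k = 0 \<Longrightarrow> k \<in> Wset B"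
proof -
  let ?a = "aW g (Wset B)"
  have finB: "finite B" using assms(1) by (rule indepc_finite)
  have finS: "finite S" using finB assms(2) finite_subset by blast
  have kc: "\<forall>h\<in>B. 0 \<le> fst h \<bullet> k" "\<forall>h\<in>B - S. fst h \<bullet> k \<le> 0" using assms(3) unfolding Kc_mem by auto
  define r where "r = k - (\<Sum>s\<in>S. (fst s \<bullet> k) *\<^sub>R dualv B s)"
  have "r \<in> Wset B" unfolding Wset_def
  proof (intro CollectI ballI)
    fix h assume h: "h \<in> B"
    have "fst h \<bullet> r = fst h \<bullet> k - (\<Sum>s\<in>S. (fst s \<bullet> k) * (fst h \<bullet> dualv B s))"
      unfolding r_def by (simp add: inner_diff_right inner_sum_right)
    also have "(\<Sum>s\<in>S. (fst s \<bullet> k) * (fst h \<bullet> dualv B s)) = (\<Sum>s\<in>S. if s = h then fst h \<bullet> k else 0)"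
      by (rule sum.cong) (use assms(2) h in \<open>auto simp: dualv_inner[OF assms(1)]\<close>)
    also have "\<dots> = (if h \<in> S then fst h \<bullet> k else 0)" using finS by simp
    finally have fr: "fst h \<bullet> r = fst h \<bullet> k - (if h \<in> S then fst h \<bullet> k else 0)" .
    show "fst h \<bullet> r = 0"
    proof (cases "h \<in> S")
      case True then show ?thesis using fr by simp
    next
      case False
      then have "0 \<le> fst h \<bullet> k" "fst h \<bullet> k \<le> 0" using kc h by auto
      then show ?thesis using fr False by simp
    qed
  qed
  then have ar: "?a \<bullet> r = 0" using aW_props[OF assms(1)] by blast
  have ak: "?a \<bullet> k = (\<Sum>s\<in>S. (fst s \<bullet> k) * (g \<bullet> dualv B s))"
  proof -
    have e: "r + (\<Sum>s\<in>S. (fst s \<bullet> k) *\<^sub>R dualv B s) = k" unfolding r_def by simp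
    have "?a \<bullet> k = ?a \<bullet> (r + (\<Sum>s\<in>S. (fst s \<bullet> k) *\<^sub>R dualv B s))" by (simp only: e)
    also have "\<dots> = ?a \<bullet> r + (\<Sum>s\<in>S. (fst s \<bullet> k) * (?a \<bullet> dualv B s))"
      by (simp add: inner_add_right inner_sum_right)
    finally have "?a \<bullet> k = ?a \<bullet> r + (\<Sum>s\<in>S. (fst s \<bullet> k) * (?a \<bullet> dualv B s))" .
    also have "\<dots> = (\<Sum>s\<in>S. (fst s \<bullet> k) * (g \<bullet> dualv B s))"
    proof -
      have "(\<Sum>s\<in>S. (fst s \<bullet> k) * (?a \<bullet> dualv B s)) = (\<Sum>s\<in>S. (fst s \<bullet> k) * (g \<bullet> dualv B s))"
      proof (rule sum.cong)
        fix s assume "s \<in> S"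
        then have "s \<in> B" using assms(2) by blast
        then show "(fst s \<bullet> k) * (?a \<bullet> dualv B s) = (fst s \<bullet> k) * (g \<bullet> dualv B s)"
          using aW_dual[OF assms(1)] by simp
      qed simp
      then show ?thesis using ar by simp
    qed
    finally show ?thesis .
  qed
  have nn: "\<forall>s\<in>S. 0 \<le> (fst s \<bullet> k) * (g \<bullet> dualv B s)"
  proof
    fix s assume s: "s \<in> S"
    then have "0 \<le> fst s \<bullet> k" using kc assms(2) by blast
    moreover have "0 < g \<bullet> dualv B s" using assms(4) s unfolding good_def by blast
    ultimately show "0 \<le> (fst s \<bullet> k) * (g \<bullet> dualv B s)" by simp
  qed
  show "?a \<bullet> k \<ge> 0" unfolding ak by (rule sum_nonneg) (use nn in blast)
  assume a0: "?a \<bullet> k = 0"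
  have z: "(\<Sum>s\<in>S. (fst s \<bullet> k) * (g \<bullet> dualv B s)) = 0" using trans[OF ak[symmetric] a0] .
  have "\<forall>s\<in>S. (fst s \<bullet> k) * (g \<bullet> dualv B s) = 0"
    using z by (subst (asm) sum_nonneg_eq_0_iff[OF finS]) (use nn in auto)
  have "\<forall>s\<in>S. fst s \<bullet> k = 0"
  proof
    fix s assume s: "s \<in> S"
    have "0 < g \<bullet> dualv B s" using assms(4) s unfolding good_def by blast
    moreover have "(fst s \<bullet> k) * (g \<bullet> dualv B s) = 0" using s \<open>\<forall>s\<in>S. _ = 0\<close> by blast
    ultimately show "fst s \<bullet> k = 0" by simp
  qed
  show "k \<in> Wset B" unfolding Wset_def
  proof (intro CollectI ballI)
    fix h assume h: "h \<in> B"
    show "fst h \<bullet> k = 0"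
    proof (cases "h \<in> S")
      case True then show ?thesis using \<open>\<forall>s\<in>S. fst s \<bullet> k = 0\<close> by blast
    next
      case False
      then have "0 \<le> fst h \<bullet> k" "fst h \<bullet> k \<le> 0" using kc h by auto
      then show ?thesis by simp
    qed
  qed
qed

lemma atom_polarized:
  assumes "indepc B" "S \<subseteq> B" "good g B S"
  shows "polarized (aW g (Wset B)) (aW g (Wset B) \<bullet> w0 B) (atomset B S)"
proof -
  let ?a = "aW g (Wset B)"
  have fin: "finite B" using assms(1) by (rule indepc_finite)
  have WK: "Wset B \<subseteq> Kc B S"
  proof
    fix x assume "x \<in> Wset B"
    then show "x \<in> Kc B S" unfolding Kc_mem Wset_def by simp
  qed
  have aW0: "\<forall>x\<in>Wset B. ?a \<bullet> x = 0" using aW_props[OF assms(1)] by blast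
  show ?thesis unfolding polarized_def atom_apex[OF assms(1)]
  proof
    show "atomset B S \<subseteq> {v. ?a \<bullet> w0 B \<le> ?a \<bullet> v}"
    proof
      fix v assume "v \<in> atomset B S"
      then have "v \<in> (\<lambda>v. w0 B + v) ` Kc B S" using atom_translate[OF assms(1)] by blast
      then have "v - w0 B \<in> Kc B S" using translate_mem by blast
      then have "?a \<bullet> (v - w0 B) \<ge> 0" using Kc_decomp(1)[OF assms(1,2) _ assms(3)] by blast
      then show "v \<in> {v. ?a \<bullet> w0 B \<le> ?a \<bullet> v}" by (simp add: inner_diff_right)
    qed
    show "atomset B S \<inter> {v. ?a \<bullet> v = ?a \<bullet> w0 B} = (\<lambda>v. w0 B + v) ` Wset B"
    proof (rule set_eqI)
      fix v
      have "v \<in> atomset B S \<longleftrightarrow> v - w0 B \<in> Kc B S" unfolding atom_translate[OF assms(1)] translate_mem ..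
      moreover have "?a \<bullet> v = ?a \<bullet> w0 B \<longleftrightarrow> ?a \<bullet> (v - w0 B) = 0" by (simp add: inner_diff_right)
      moreover have "v - w0 B \<in> Kc B S \<Longrightarrow> ?a \<bullet> (v - w0 B) = 0 \<Longrightarrow> v - w0 B \<in> Wset B"
        using Kc_decomp(2)[OF assms(1,2) _ assms(3)] by blast
      moreover have "v - w0 B \<in> Wset B \<Longrightarrow> v - w0 B \<in> Kc B S" using WK by blast
      moreover have "v - w0 B \<in> Wset B \<Longrightarrow> ?a \<bullet> (v - w0 B) = 0" using aW0 by blast
      ultimately show "v \<in> atomset B S \<inter> {v. ?a \<bullet> v = ?a \<bullet> w0 B} \<longleftrightarrow> v \<in> (\<lambda>v. w0 B + v) ` Wset B"
        unfolding translate_mem[of v] by blast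
    qed
  qed
qed

lemma aW_nonzero:
  assumes "indepc B" "\<forall>h\<in>B. g \<bullet> dualv B h \<noteq> 0" "Wset B \<noteq> UNIV"
  shows "aW g (Wset B) \<noteq> 0"
proof -
  have "B \<noteq> {}" using assms(3) unfolding Wset_def by auto
  then obtain h where h: "h \<in> B" by blast
  then have "aW g (Wset B) \<bullet> dualv B h \<noteq> 0" using aW_dual[OF assms(1) h] assms(2) by simp
  then show ?thesis by auto
qed

lemma rat_neg: "rat_functional \<Lambda> a \<Longrightarrow> rat_functional \<Lambda> (- a)"
  unfolding rat_functional_def by auto

lemma atom_rat_poly_cone:
  assumes "indepc B" "\<forall>h\<in>B. rat_functional \<Lambda> (fst h) \<and> snd h \<in> \<rat>"
  shows "rat_poly_cone \<Lambda> (atomset B S)"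
proof -
  have fin: "finite B" using assms(1) by (rule indepc_finite)
  let ?F = "B \<union> negc ` (B - S)"
  have "rat_polyhedron \<Lambda> (atomset B S)" unfolding rat_polyhedron_def
  proof (intro exI[of _ ?F] conjI)
    show "finite ?F" using fin by simp
    show "\<forall>(a, c)\<in>?F. rat_functional \<Lambda> a \<and> c \<in> \<rat>"
      using assms(2) by (auto simp: negc_def rat_neg)
    have e1: "(\<Inter>(a, c)\<in>?F. {v. c \<le> a \<bullet> v}) = (\<Inter>p\<in>?F. {v. sat p v})"
    proof (rule INF_cong)
      fix p :: "'a \<times> real"
      show "(case p of (a, c) \<Rightarrow> {v. c \<le> a \<bullet> v}) = {v. sat p v}" by (cases p) (simp add: sat_def)
    qed simp
    have e2: "(\<Inter>p\<in>?F. {v. sat p v}) = {v. \<forall>p\<in>?F. sat p v}" by auto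
    have e3: "atomset B S = {v. \<forall>p\<in>?F. sat p v}" unfolding atomset_def by auto
    show "atomset B S = (\<Inter>(a, c)\<in>?F. {v. c \<le> a \<bullet> v})" unfolding e1 e2 e3 ..
  qed
  then show ?thesis unfolding rat_poly_cone_def
    using atom_translate[OF assms(1)] Kc_props[OF fin] by blast
qed


lemma qp_const: "quasi_poly \<Lambda> (\<lambda>z. c)"
  by (rule qp_periodic) (auto simp: periodic_fun_def intro: exI[of _ 1])

lemma qp_sum:
  assumes "finite A" "\<forall>j\<in>A. quasi_poly \<Lambda> (f j)"
  shows "quasi_poly \<Lambda> (\<lambda>z. \<Sum>j\<in>A. f j z)"
  using assms
proof (induction A rule: finite_induct)
  case empty then show ?case using qp_const[of \<Lambda> 0] by simp
next
  case (insert x A)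
  then have "quasi_poly \<Lambda> (\<lambda>z. f x z + (\<Sum>j\<in>A. f j z))" by (intro qp_add) auto
  then show ?case using insert by simp
qed

lemma in_cone_iff:
  "in_cone Q s (t, x) \<longleftrightarrow> 0 < t \<and> inverse (of_int t) *\<^sub>R (x - s) \<in> Q"
proof
  assume "in_cone Q s (t, x)"
  then obtain v where v: "0 < t" "v \<in> Q" "x = of_int t *\<^sub>R v + s" unfolding in_cone_def by auto
  then have "inverse (of_int t) *\<^sub>R (x - s) = v" by simp
  then show "0 < t \<and> inverse (of_int t) *\<^sub>R (x - s) \<in> Q" using v by simp
next
  assume a: "0 < t \<and> inverse (of_int t) *\<^sub>R (x - s) \<in> Q"
  have "x = of_int t *\<^sub>R (inverse (of_int t) *\<^sub>R (x - s)) + s" using a by simp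
  then have "\<exists>v\<in>Q. x = of_int t *\<^sub>R v + s" using a by blast
  then show "in_cone Q s (t, x)" unfolding in_cone_def using a by simp
qed

lemma translate_eq:
  fixes W W' :: "'v::real_vector set"
  assumes e: "(\<lambda>v. w + v) ` W = (\<lambda>v. w' + v) ` W'"
    and W: "0 \<in> W" "\<forall>x\<in>W. \<forall>y\<in>W. x - y \<in> W"
    and W': "0 \<in> W'" "\<forall>x\<in>W'. \<forall>y\<in>W'. x - y \<in> W'"
  shows "W' = W" "w' - w \<in> W"
proof -
  have "w' + 0 \<in> (\<lambda>v. w + v) ` W" using e W'(1) by blast
  then show d: "w' - w \<in> W" using translate_mem by force
  have "w + 0 \<in> (\<lambda>v. w' + v) ` W'" using e W(1) by blast
  then have d': "w - w' \<in> W'" using translate_mem by force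
  show "W' = W"
  proof
    show "W' \<subseteq> W"
    proof
      fix y assume "y \<in> W'"
      then have "w' + y \<in> (\<lambda>v. w + v) ` W" using e by blast
      then have "w' + y - w \<in> W" using translate_mem by blast
      then have "(w' + y - w) - (w' - w) \<in> W" using W(2) d by blast
      then show "y \<in> W" by simp
    qed
    show "W \<subseteq> W'"
    proof
      fix y assume "y \<in> W"
      then have "w + y \<in> (\<lambda>v. w' + v) ` W'" using e by blast
      then have "w + y - w' \<in> W'" using translate_mem by blast
      then have "(w + y - w') - (w - w') \<in> W'" using W'(2) d' by blast
      then show "y \<in> W'" by simp
    qed
  qed
qed

lemma atom_full:
  assumes "goodP Apm g Q" "\<forall>B\<subseteq>Apm. indepc B \<longrightarrow> (\<forall>h\<in>B. g \<bullet> dualv B h \<noteq> 0)"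
  shows "\<exists>w W. apex_set Q = (\<lambda>v. w + v) ` W \<and> polarized (aW g W) (aW g W \<bullet> w) Q \<and>
     (\<forall>x\<in>W. aW g W \<bullet> x = 0) \<and> (W \<noteq> UNIV \<longrightarrow> aW g W \<noteq> 0) \<and>
     0 \<in> W \<and> (\<forall>x\<in>W. \<forall>y\<in>W. x - y \<in> W)"
proof -
  obtain B S where BS: "B \<subseteq> Apm" "indepc B" "S \<subseteq> B" "good g B S" "Q = atomset B S"
    using assms(1) unfolding goodP_def by blast
  have "apex_set Q = (\<lambda>v. w0 B + v) ` Wset B" using atom_apex[OF BS(2)] BS(5) by simp
  moreover have "polarized (aW g (Wset B)) (aW g (Wset B) \<bullet> w0 B) Q"
    using atom_polarized[OF BS(2-4)] BS(5) by simp
  moreover have "\<forall>x\<in>Wset B. aW g (Wset B) \<bullet> x = 0" using aW_props[OF BS(2)] by blast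
  moreover have "Wset B \<noteq> UNIV \<longrightarrow> aW g (Wset B) \<noteq> 0"
    using aW_nonzero[OF BS(2)] assms(2) BS(1,2) by blast
  moreover have "0 \<in> Wset B" "\<forall>x\<in>Wset B. \<forall>y\<in>Wset B. x - y \<in> Wset B"
    unfolding Wset_def by (auto simp: inner_diff_right)
  ultimately show ?thesis by blast
qed


theorem proposition4p9:
  fixes \<Lambda> :: "'v::euclidean_space set"
    and J :: "'j set"
    and P :: "'j \<Rightarrow> 'v set"
    and \<sigma> :: "'j \<Rightarrow> 'v"
    and q :: "'j \<Rightarrow> int \<times> 'v \<Rightarrow> complex"
    and m :: "int \<times> 'v \<Rightarrow> complex"
  assumes "full_rank_lattice \<Lambda>"
    and "finite J"
    and "\<forall>j\<in>J. rat_polyhedron \<Lambda> (P j)"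
    and "\<forall>j\<in>J. \<sigma> j \<in> lattice_Q \<Lambda>"
    and "\<forall>j\<in>J. quasi_poly \<Lambda> (q j)"
    and "\<forall>t x. x \<in> \<Lambda> \<longrightarrow>
           m (t, x) = (\<Sum>j\<in>J. q j (t, x) * of_bool (in_cone (P j) (\<sigma> j) (t, x)))"
  shows "in_S_pol \<Lambda> m"
proof -
  have "\<forall>j\<in>J. \<exists>F. finite F \<and> (\<forall>(a, c)\<in>F. rat_functional \<Lambda> a \<and> c \<in> \<rat>) \<and>
          P j = (\<Inter>(a, c)\<in>F. {v. a \<bullet> v \<ge> c})"
    using assms(3) unfolding rat_polyhedron_def by blast
  then obtain FF where FF: "\<forall>j\<in>J. finite (FF j) \<and> (\<forall>(a, c)\<in>FF j. rat_functional \<Lambda> a \<and> c \<in> \<rat>) \<and>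
          P j = (\<Inter>(a, c)\<in>FF j. {v. a \<bullet> v \<ge> c})"
    by (rule bchoice[elim_format]) blast
  define A where "A = \<Union> (FF ` J)"
  define Apm where "Apm = A \<union> negc ` A"
  have finA: "finite A" unfolding A_def using FF assms(2) by blast
  have finApm: "finite Apm" unfolding Apm_def using finA by simp
  have negnegc: "negc (negc h) = h" for h :: "'v \<times> real" by (simp add: negc_def)
  have negc_closed: "\<forall>h\<in>Apm. negc h \<in> Apm"
    unfolding Apm_def using negnegc by auto
  have ratA: "\<forall>h\<in>A. rat_functional \<Lambda> (fst h) \<and> snd h \<in> \<rat>"
  proof
    fix h assume "h \<in> A"
    then obtain j where j: "j \<in> J" "h \<in> FF j" unfolding A_def by blast
    then show "rat_functional \<Lambda> (fst h) \<and> snd h \<in> \<rat>" using FF by (cases h) fastforce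
  qed
  have ratApm: "\<forall>h\<in>Apm. rat_functional \<Lambda> (fst h) \<and> snd h \<in> \<rat>"
    unfolding Apm_def using ratA by (auto simp: negc_def rat_neg)
  define Z where "Z = (\<lambda>(B, h). dualv B h) ` {(B, h). B \<subseteq> Apm \<and> indepc B \<and> h \<in> B}"
  have "finite Z" unfolding Z_def
  proof (rule finite_imageI)
    have "{(B, h). B \<subseteq> Apm \<and> indepc B \<and> h \<in> B} \<subseteq> Pow Apm \<times> Apm" by auto
    then show "finite {(B, h). B \<subseteq> Apm \<and> indepc B \<and> h \<in> B}"
      using finApm by (meson finite_Pow_iff finite_SigmaI finite_subset)
  qed
  then obtain g where g: "\<forall>z\<in>Z. z \<noteq> 0 \<longrightarrow> g \<bullet> z \<noteq> 0" using generic_exists by blast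
  have gen: "\<forall>B\<subseteq>Apm. indepc B \<longrightarrow> (\<forall>h\<in>B. g \<bullet> dualv B h \<noteq> 0)"
  proof (intro allI impI ballI)
    fix B h assume "B \<subseteq> Apm" "indepc B" "h \<in> B"
    then have "dualv B h \<in> Z" unfolding Z_def by force
    moreover have "dualv B h \<noteq> 0" using dualv_nz \<open>indepc B\<close> \<open>h \<in> B\<close> by blast
    ultimately show "g \<bullet> dualv B h \<noteq> 0" using g by blast
  qed
  have reprP: "repr Apm g (\<lambda>v. of_bool (v \<in> P j))" if j: "j \<in> J" for j
  proof -
    have sub: "FF j \<subseteq> Apm" unfolding Apm_def A_def using j by blast
    have r: "repr Apm g (\<lambda>v. of_bool (\<forall>h\<in>FF j. sat h v))"
      using stage1[OF negc_closed gen finApm sub] .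
    have Pj: "P j = (\<Inter>(a, c)\<in>FF j. {v. a \<bullet> v \<ge> c})" using FF j by blast
    have e1: "(\<Inter>(a, c)\<in>FF j. {v. a \<bullet> v \<ge> c}) = (\<Inter>p\<in>FF j. {v. sat p v})"
    proof (rule INF_cong)
      fix p :: "'v \<times> real"
      show "(case p of (a, c) \<Rightarrow> {v. c \<le> a \<bullet> v}) = {v. sat p v}" by (cases p) (simp add: sat_def)
    qed simp
    have "v \<in> P j \<longleftrightarrow> (\<forall>h\<in>FF j. sat h v)" for v
      unfolding Pj e1 by blast
    then show ?thesis by (intro repr_cong[OF r]) (simp only:)
  qed
  have "\<forall>j\<in>J. \<exists>Rk. finite (fst Rk) \<and> (\<forall>Q\<in>fst Rk. goodP Apm g Q) \<and>
      (\<forall>v. (of_bool (v \<in> P j) :: int) = (\<Sum>Q\<in>fst Rk. snd Rk Q * of_bool (v \<in> Q)))"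
  proof
    fix j assume "j \<in> J"
    have "\<exists>R \<kappa>. finite R \<and> (\<forall>Q\<in>R. goodP Apm g Q) \<and> (\<forall>v. (of_bool (v \<in> P j) :: int) = (\<Sum>Q\<in>R. \<kappa> Q * of_bool (v \<in> Q)))"
      using reprP[OF \<open>j \<in> J\<close>] unfolding repr_def .
    then obtain R \<kappa> where "finite R" "\<forall>Q\<in>R. goodP Apm g Q" "\<forall>v. (of_bool (v \<in> P j) :: int) = (\<Sum>Q\<in>R. \<kappa> Q * of_bool (v \<in> Q))"
      by (elim exE conjE)
    then show "\<exists>Rk. finite (fst Rk) \<and> (\<forall>Q\<in>fst Rk. goodP Apm g Q) \<and>
      (\<forall>v. (of_bool (v \<in> P j) :: int) = (\<Sum>Q\<in>fst Rk. snd Rk Q * of_bool (v \<in> Q)))"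
      by (intro exI[of _ "(R, \<kappa>)"]) (unfold fst_conv snd_conv, blast)
  qed
  then have "\<exists>Rk. \<forall>j\<in>J. finite (fst (Rk j)) \<and> (\<forall>Q\<in>fst (Rk j). goodP Apm g Q) \<and>
      (\<forall>v. (of_bool (v \<in> P j) :: int) = (\<Sum>Q\<in>fst (Rk j). snd (Rk j) Q * of_bool (v \<in> Q)))"
    by (rule bchoice)
  then obtain Rk where Rk: "\<forall>j\<in>J. finite (fst (Rk j)) \<and> (\<forall>Q\<in>fst (Rk j). goodP Apm g Q) \<and>
      (\<forall>v. (of_bool (v \<in> P j) :: int) = (\<Sum>Q\<in>fst (Rk j). snd (Rk j) Q * of_bool (v \<in> Q)))" ..
  define R where "R = (\<Union>j\<in>J. fst (Rk j))"
  define \<kappa> where "\<kappa> j Q = (if Q \<in> fst (Rk j) then snd (Rk j) Q else 0)" for j Q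
  have finR: "finite R" unfolding R_def using Rk assms(2) by blast
  have goodR: "\<forall>Q\<in>R. goodP Apm g Q" unfolding R_def using Rk by blast
  have ind: "(of_bool (v \<in> P j) :: int) = (\<Sum>Q\<in>R. \<kappa> j Q * of_bool (v \<in> Q))" if j: "j \<in> J" for j v
  proof -
    have "(\<Sum>Q\<in>R. \<kappa> j Q * of_bool (v \<in> Q)) = (\<Sum>Q\<in>fst (Rk j). snd (Rk j) Q * of_bool (v \<in> Q))"
      unfolding \<kappa>_def by (rule sum_if_restrict[OF finR]) (use j in \<open>auto simp: R_def\<close>)
    then show ?thesis using Rk j by simp
  qed
  have cone_ind: "(of_bool (in_cone (P j) (\<sigma> j) (t, x)) :: int) =
      (\<Sum>Q\<in>R. \<kappa> j Q * of_bool (in_cone Q (\<sigma> j) (t, x)))" if j: "j \<in> J" for j t x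
  proof (cases "0 < t")
    case True
    then show ?thesis unfolding in_cone_iff using ind[OF j] by simp
  next
    case False
    then show ?thesis unfolding in_cone_iff by simp
  qed
  define I where "I = R \<times> \<sigma> ` J"
  define qI where "qI Q s = (\<lambda>z. \<Sum>j\<in>{j\<in>J. \<sigma> j = s}. of_int (\<kappa> j Q) * q j z)" for Q s
  have finI: "finite I" unfolding I_def using finR assms(2) by simp
  have rpc: "\<forall>Q\<in>R. rat_poly_cone \<Lambda> Q"
  proof
    fix Q assume "Q \<in> R"
    then have "goodP Apm g Q" using goodR by blast
    then obtain B S where BS: "B \<subseteq> Apm" "indepc B" "Q = atomset B S"
      unfolding goodP_def by blast
    have "\<forall>h\<in>B. rat_functional \<Lambda> (fst h) \<and> snd h \<in> \<rat>" using BS(1) ratApm by blast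
    then show "rat_poly_cone \<Lambda> Q" using atom_rat_poly_cone[OF BS(2)] BS(3) by simp
  qed
  have dec1: "\<forall>(Q, s)\<in>I. rat_polyhedron \<Lambda> Q \<and> s \<in> lattice_Q \<Lambda> \<and> quasi_poly \<Lambda> (qI Q s)"
  proof (intro ballI, clarify)
    fix Q s assume Qs: "(Q, s) \<in> I"
    then have Q: "Q \<in> R" and s: "s \<in> \<sigma> ` J" unfolding I_def by auto
    have "rat_polyhedron \<Lambda> Q" using rpc Q unfolding rat_poly_cone_def by blast
    moreover have "s \<in> lattice_Q \<Lambda>" using s assms(4) by blast
    moreover have "quasi_poly \<Lambda> (qI Q s)" unfolding qI_def
    proof (rule qp_sum)
      show "finite {j \<in> J. \<sigma> j = s}" using assms(2) by simp
      show "\<forall>j\<in>{j \<in> J. \<sigma> j = s}. quasi_poly \<Lambda> (\<lambda>z. of_int (\<kappa> j Q) * q j z)"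
      proof
        fix j assume "j \<in> {j \<in> J. \<sigma> j = s}"
        then have "quasi_poly \<Lambda> (q j)" using assms(5) by blast
        then show "quasi_poly \<Lambda> (\<lambda>z. of_int (\<kappa> j Q) * q j z)" by (rule qp_mult[OF qp_const])
      qed
    qed
    ultimately show "rat_polyhedron \<Lambda> Q \<and> s \<in> lattice_Q \<Lambda> \<and> quasi_poly \<Lambda> (qI Q s)" by blast
  qed
  have dec2: "locally_finite_fam I"
    unfolding locally_finite_fam_def using finI by (auto intro: exI[of _ 1])
  have dec3: "m (t, x) = (\<Sum>p\<in>{p\<in>I. in_cone (fst p) (snd p) (t, x)}. qI (fst p) (snd p) (t, x))"
    if x: "x \<in> \<Lambda>" for t x
  proof -
    let ?c = "\<lambda>Q s. in_cone Q s (t, x)"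
    have "m (t, x) = (\<Sum>j\<in>J. q j (t, x) * of_bool (?c (P j) (\<sigma> j)))" using assms(6) x by blast
    also have "\<dots> = (\<Sum>j\<in>J. \<Sum>Q\<in>R. of_int (\<kappa> j Q) * q j (t, x) * of_bool (?c Q (\<sigma> j)))"
    proof (rule sum.cong)
      fix j assume j: "j \<in> J"
      have "(of_bool (?c (P j) (\<sigma> j)) :: complex) = of_int (of_bool (?c (P j) (\<sigma> j)))" by simp
      also have "\<dots> = of_int (\<Sum>Q\<in>R. \<kappa> j Q * of_bool (?c Q (\<sigma> j)))" using cone_ind[OF j] by simp
      also have "\<dots> = (\<Sum>Q\<in>R. of_int (\<kappa> j Q) * of_bool (?c Q (\<sigma> j)))" by simp
      finally show "q j (t, x) * of_bool (?c (P j) (\<sigma> j)) = (\<Sum>Q\<in>R. of_int (\<kappa> j Q) * q j (t, x) * of_bool (?c Q (\<sigma> j)))"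
        by (simp add: sum_distrib_left mult.assoc mult.left_commute)
    qed simp
    also have "\<dots> = (\<Sum>Q\<in>R. \<Sum>j\<in>J. of_int (\<kappa> j Q) * q j (t, x) * of_bool (?c Q (\<sigma> j)))"
      by (rule sum.swap)
    also have "\<dots> = (\<Sum>Q\<in>R. \<Sum>s\<in>\<sigma> ` J. \<Sum>j\<in>{j\<in>J. \<sigma> j = s}. of_int (\<kappa> j Q) * q j (t, x) * of_bool (?c Q (\<sigma> j)))"
    proof (rule sum.cong)
      fix Q assume "Q \<in> R"
      show "(\<Sum>j\<in>J. of_int (\<kappa> j Q) * q j (t, x) * of_bool (?c Q (\<sigma> j))) =
        (\<Sum>s\<in>\<sigma> ` J. \<Sum>j\<in>{j\<in>J. \<sigma> j = s}. of_int (\<kappa> j Q) * q j (t, x) * of_bool (?c Q (\<sigma> j)))"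
        by (rule sum.group[symmetric]) (use assms(2) in auto)
    qed simp
    also have "\<dots> = (\<Sum>Q\<in>R. \<Sum>s\<in>\<sigma> ` J. if ?c Q s then qI Q s (t, x) else 0)"
    proof (intro sum.cong refl)
      fix Q s assume "s \<in> \<sigma> ` J"
      have "(\<Sum>j\<in>{j\<in>J. \<sigma> j = s}. of_int (\<kappa> j Q) * q j (t, x) * of_bool (?c Q (\<sigma> j))) =
            (\<Sum>j\<in>{j\<in>J. \<sigma> j = s}. of_int (\<kappa> j Q) * q j (t, x) * of_bool (?c Q s))"
        by (rule sum.cong) auto
      also have "\<dots> = (if ?c Q s then qI Q s (t, x) else 0)"
        unfolding qI_def by (simp add: sum_distrib_right)
      finally show "(\<Sum>j\<in>{j\<in>J. \<sigma> j = s}. of_int (\<kappa> j Q) * q j (t, x) * of_bool (?c Q (\<sigma> j))) =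
            (if ?c Q s then qI Q s (t, x) else 0)" .
    qed
    also have "\<dots> = (\<Sum>p\<in>I. if ?c (fst p) (snd p) then qI (fst p) (snd p) (t, x) else 0)"
      unfolding I_def sum.cartesian_product by (simp add: case_prod_beta)
    also have "\<dots> = (\<Sum>p\<in>{p\<in>I. in_cone (fst p) (snd p) (t, x)}. qI (fst p) (snd p) (t, x))"
      using finI by (simp add: sum.inter_filter)
    finally show ?thesis .
  qed
  have pol: "\<forall>Q\<in>fst ` I. apex_set Q \<noteq> UNIV \<longrightarrow>
           (\<exists>a c. a \<noteq> 0 \<and> (\<forall>Q'\<in>fst ` I. apex_set Q' = apex_set Q \<longrightarrow> polarized a c Q'))"
  proof (intro ballI impI)
    fix Q assume Q: "Q \<in> fst ` I" and ne: "apex_set Q \<noteq> UNIV"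
    have QR: "Q \<in> R" using Q unfolding I_def by (auto split: if_splits)
    obtain w W where wW: "apex_set Q = (\<lambda>v. w + v) ` W" "polarized (aW g W) (aW g W \<bullet> w) Q"
      "\<forall>x\<in>W. aW g W \<bullet> x = 0" "W \<noteq> UNIV \<longrightarrow> aW g W \<noteq> 0" "0 \<in> W" "\<forall>x\<in>W. \<forall>y\<in>W. x - y \<in> W"
      using atom_full[OF _ gen] goodR QR by blast
    have "W \<noteq> UNIV"
    proof
      assume "W = UNIV"
      then have "apex_set Q = UNIV" using wW(1) translate_mem by auto
      then show False using ne by simp
    qed
    then have a0: "aW g W \<noteq> 0" using wW(4) by blast
    have "\<forall>Q'\<in>fst ` I. apex_set Q' = apex_set Q \<longrightarrow> polarized (aW g W) (aW g W \<bullet> w) Q'"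
    proof (intro ballI impI)
      fix Q' assume Q': "Q' \<in> fst ` I" and eq: "apex_set Q' = apex_set Q"
      have Q'R: "Q' \<in> R" using Q' unfolding I_def by (auto split: if_splits)
      obtain w' W' where wW': "apex_set Q' = (\<lambda>v. w' + v) ` W'" "polarized (aW g W') (aW g W' \<bullet> w') Q'"
        "0 \<in> W'" "\<forall>x\<in>W'. \<forall>y\<in>W'. x - y \<in> W'"
        using atom_full[OF _ gen] goodR Q'R by blast
      have e: "(\<lambda>v. w + v) ` W = (\<lambda>v. w' + v) ` W'" using wW(1) wW'(1) eq by simp
      have WW: "W' = W" and d: "w' - w \<in> W" using translate_eq[OF e wW(5,6) wW'(3,4)] by auto
      have "aW g W \<bullet> (w' - w) = 0" using wW(3) d by blast
      then have "aW g W \<bullet> w' = aW g W \<bullet> w" by (simp add: inner_diff_right)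
      then show "polarized (aW g W) (aW g W \<bullet> w) Q'" using wW'(2) WW by simp
    qed
    then show "\<exists>a c. a \<noteq> 0 \<and> (\<forall>Q'\<in>fst ` I. apex_set Q' = apex_set Q \<longrightarrow> polarized a c Q')"
      using a0 by blast
  qed
  have "is_decomposition \<Lambda> m I qI"
    unfolding is_decomposition_def using dec1 dec2 dec3 by blast
  moreover have "\<forall>p\<in>I. rat_poly_cone \<Lambda> (fst p)" using rpc unfolding I_def by auto
  ultimately show ?thesis unfolding in_S_pol_def using pol by blast
qed

end
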